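(* Let $D$ be a Dedekind domain and let $M$ be a nonzero finitely generated multiplication $D$-module. Then $M$ is isomorphic to a nonzero ideal of $D$ (e.g. $D$ itself) or to $D/I$ for some nonzero ideal $I$ of $D$.
   Context: All rings are commutative with $1$ and all modules are unital. An $R$-module $M$ is a multiplication module if every submodule of $M$ equals $IM$ for some ideal $I$ of $R$. *)

theory Defs
  imports "HOL-Algebra.Algebra"
begin

text \<open>Integral closedness in the field of fractions, written out with denominators cleared:
  if a/b (b nonzero) is a root of a monic polynomial X^n + c_(n-1) X^(n-1) + ... + c_0
  with coefficients in R, i.e. a^n + sum_(i<n) c_i a^i b^(n-i) = 0, then a/b lies in R,
  i.e. b divides a.\<close>
definition integrally_closed_domain :: "('a, 'c) ring_scheme \<Rightarrow> bool" where
  "integrally_closed_domain R \<longleftrightarrow> domain R \<and>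
     (\<forall>a \<in> carrier R. \<forall>b \<in> carrier R. \<forall>n::nat. \<forall>c::nat \<Rightarrow> 'a.
        b \<noteq> \<zero>\<^bsub>R\<^esub> \<and> n \<ge> 1 \<and> (\<forall>i. c i \<in> carrier R) \<and>
        a [^]\<^bsub>R\<^esub> n \<oplus>\<^bsub>R\<^esub>
          (\<Oplus>\<^bsub>R\<^esub> i \<in> {..<n}. c i \<otimes>\<^bsub>R\<^esub> a [^]\<^bsub>R\<^esub> i \<otimes>\<^bsub>R\<^esub> b [^]\<^bsub>R\<^esub> (n - i))
          = \<zero>\<^bsub>R\<^esub>
        \<longrightarrow> b divides\<^bsub>R\<^esub> a)"

definition dedekind_domain :: "('a, 'c) ring_scheme \<Rightarrow> bool" where
  "dedekind_domain R \<longleftrightarrow> noetherian_domain R \<and> integrally_closed_domain R \<and>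
     (\<forall>P. primeideal P R \<and> P \<noteq> {\<zero>\<^bsub>R\<^esub>} \<longrightarrow> maximalideal P R)"

definition gen_submodule :: "('a, 'c) ring_scheme \<Rightarrow> ('a, 'b, 'd) module_scheme \<Rightarrow> 'b set \<Rightarrow> 'b set" where
  "gen_submodule R M S = \<Inter> {N. submodule N R M \<and> S \<subseteq> N}"

definition finitely_generated_module :: "('a, 'c) ring_scheme \<Rightarrow> ('a, 'b, 'd) module_scheme \<Rightarrow> bool" where
  "finitely_generated_module R M \<longleftrightarrow>
     (\<exists>S. finite S \<and> S \<subseteq> carrier M \<and> carrier M = gen_submodule R M S)"

definition ideal_times_module :: "('a, 'c) ring_scheme \<Rightarrow> 'a set \<Rightarrow> ('a, 'b, 'd) module_scheme \<Rightarrow> 'b set" where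
  "ideal_times_module R I M =
     gen_submodule R M {a \<odot>\<^bsub>M\<^esub> x | a x. a \<in> I \<and> x \<in> carrier M}"

definition multiplication_module :: "('a, 'c) ring_scheme \<Rightarrow> ('a, 'b, 'd) module_scheme \<Rightarrow> bool" where
  "multiplication_module R M \<longleftrightarrow>
     (\<forall>N. submodule N R M \<longrightarrow> (\<exists>I. ideal I R \<and> N = ideal_times_module R I M))"

definition module_iso :: "('a, 'c) ring_scheme \<Rightarrow> ('a, 'b, 'd) module_scheme \<Rightarrow> ('a, 'e, 'f) module_scheme
    \<Rightarrow> ('b \<Rightarrow> 'e) \<Rightarrow> bool" where
  "module_iso R M N f \<longleftrightarrow>
     bij_betw f (carrier M) (carrier N) \<and>
     (\<forall>x \<in> carrier M. \<forall>y \<in> carrier M. f (x \<oplus>\<^bsub>M\<^esub> y) = f x \<oplus>\<^bsub>N\<^esub> f y) \<and>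
     (\<forall>a \<in> carrier R. \<forall>x \<in> carrier M. f (a \<odot>\<^bsub>M\<^esub> x) = a \<odot>\<^bsub>N\<^esub> f x)"

definition module_isomorphic :: "('a, 'c) ring_scheme \<Rightarrow> ('a, 'b, 'd) module_scheme \<Rightarrow> ('a, 'e, 'f) module_scheme
    \<Rightarrow> bool" where
  "module_isomorphic R M N \<longleftrightarrow> (\<exists>f. module_iso R M N f)"

definition ideal_module :: "('a, 'c) ring_scheme \<Rightarrow> 'a set \<Rightarrow> ('a, 'a) module" where
  "ideal_module R J =
     \<lparr>carrier = J, monoid.mult = monoid.mult R, one = monoid.one R, ring.zero = ring.zero R, ring.add = ring.add R,
      smult = monoid.mult R\<rparr>"

definition quot_smult :: "('a, 'c) ring_scheme \<Rightarrow> 'a set \<Rightarrow> 'a \<Rightarrow> 'a set \<Rightarrow> 'a set" where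
  "quot_smult R I r C = monoid.mult (FactRing R I) (a_r_coset R I r) C"

definition quotient_module :: "('a, 'c) ring_scheme \<Rightarrow> 'a set \<Rightarrow> ('a, 'a set) module" where
  "quotient_module R I =
     \<lparr>carrier = carrier (R Quot I), monoid.mult = monoid.mult (R Quot I),
      one = monoid.one (R Quot I), ring.zero = ring.zero (R Quot I), ring.add = ring.add (R Quot I),
      smult = quot_smult R I\<rparr>"

end

theory Submission
  imports Defs
begin

locale dmod = module R M for R :: "('a, 'c) ring_scheme" and M :: "('a, 'b, 'd) module_scheme"
begin

lemma submodule_zero: "submodule N R M \<Longrightarrow> \<zero>\<^bsub>M\<^esub> \<in> N"
proof -
  assume N: "submodule N R M"
  then obtain a where a: "a \<in> N" using submoduleE(2) by blast
  then have "a \<in> carrier M" using submoduleE(1)[OF N] by blast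
  then have "\<zero>\<^bsub>M\<^esub> = \<zero>\<^bsub>R\<^esub> \<odot>\<^bsub>M\<^esub> a" by simp
  also have "\<dots> \<in> N" using submoduleE(4)[OF N] a by simp
  finally show ?thesis .
qed

lemma gen_sub:
  assumes "S \<subseteq> carrier M" shows "submodule (gen_submodule R M S) R M"
proof (rule submoduleI)
  let ?F = "{N. submodule N R M \<and> S \<subseteq> N}"
  have cF: "carrier M \<in> ?F" using carrier_is_submodule assms by auto
  show "gen_submodule R M S \<subseteq> carrier M" unfolding gen_submodule_def using cF by blast
  show "\<zero>\<^bsub>M\<^esub> \<in> gen_submodule R M S" unfolding gen_submodule_def using submodule_zero by blast
  show "\<ominus>\<^bsub>M\<^esub> a \<in> gen_submodule R M S" if "a \<in> gen_submodule R M S" for a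
    using that unfolding gen_submodule_def using submoduleE(3) by blast
  show "a \<oplus>\<^bsub>M\<^esub> b \<in> gen_submodule R M S" if "a \<in> gen_submodule R M S" "b \<in> gen_submodule R M S" for a b
    using that unfolding gen_submodule_def using submoduleE(5) by blast
  show "a \<odot>\<^bsub>M\<^esub> x \<in> gen_submodule R M S" if "a \<in> carrier R" "x \<in> gen_submodule R M S" for a x
    using that unfolding gen_submodule_def using submoduleE(4) by blast
qed

lemma gen_least: "submodule N R M \<Longrightarrow> S \<subseteq> N \<Longrightarrow> gen_submodule R M S \<subseteq> N"
  unfolding gen_submodule_def by (rule Inter_lower) simp

lemma gen_self: "S \<subseteq> gen_submodule R M S"
  unfolding gen_submodule_def by (rule Inter_greatest) simp

lemma itm_sub: "I \<subseteq> carrier R \<Longrightarrow> submodule (ideal_times_module R I M) R M"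
  unfolding ideal_times_module_def
proof (rule gen_sub)
  assume "I \<subseteq> carrier R"
  then show "{a \<odot>\<^bsub>M\<^esub> x |a x. a \<in> I \<and> x \<in> carrier M} \<subseteq> carrier M"
    using smult_closed by blast
qed

lemma itm_gen: "a \<in> I \<Longrightarrow> x \<in> carrier M \<Longrightarrow> a \<odot>\<^bsub>M\<^esub> x \<in> ideal_times_module R I M"
  unfolding ideal_times_module_def by (rule subsetD[OF gen_self]) blast

lemma itm_least: "submodule N R M \<Longrightarrow> (\<And>a x. a \<in> I \<Longrightarrow> x \<in> carrier M \<Longrightarrow> a \<odot>\<^bsub>M\<^esub> x \<in> N)
   \<Longrightarrow> ideal_times_module R I M \<subseteq> N"
  unfolding ideal_times_module_def by (rule gen_least) auto

lemma itm_mono: "J \<subseteq> carrier R \<Longrightarrow> I \<subseteq> J \<Longrightarrow> ideal_times_module R I M \<subseteq> ideal_times_module R J M"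
  by (rule itm_least[OF itm_sub]) (simp, rule itm_gen, auto)


definition cyc where "cyc m = {c \<odot>\<^bsub>M\<^esub> m | c. c \<in> carrier R}"

lemma cycI: "c \<in> carrier R \<Longrightarrow> c \<odot>\<^bsub>M\<^esub> m \<in> cyc m"
  unfolding cyc_def by auto

lemma cycE: "x \<in> cyc m \<Longrightarrow> \<exists>c\<in>carrier R. x = c \<odot>\<^bsub>M\<^esub> m"
  unfolding cyc_def by auto

lemma cyc_sub: assumes m: "m \<in> carrier M" shows "submodule (cyc m) R M"
proof (rule submoduleI)
  show "cyc m \<subseteq> carrier M"
  proof
    fix x assume "x \<in> cyc m"
    then obtain c where "c \<in> carrier R" "x = c \<odot>\<^bsub>M\<^esub> m" using cycE by blast
    then show "x \<in> carrier M" using m by simp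
  qed
  have "\<zero>\<^bsub>M\<^esub> = \<zero>\<^bsub>R\<^esub> \<odot>\<^bsub>M\<^esub> m" using m by simp
  then show "\<zero>\<^bsub>M\<^esub> \<in> cyc m" using cycI[of "\<zero>\<^bsub>R\<^esub>" m] by simp
  show "\<ominus>\<^bsub>M\<^esub> a \<in> cyc m" if h: "a \<in> cyc m" for a
  proof -
    obtain c where c: "c \<in> carrier R" "a = c \<odot>\<^bsub>M\<^esub> m" using cycE[OF h] by blast
    have "\<ominus>\<^bsub>M\<^esub> a = (\<ominus>\<^bsub>R\<^esub> c) \<odot>\<^bsub>M\<^esub> m" using c m by (simp add: smult_l_minus)
    then show ?thesis using cycI[of "\<ominus>\<^bsub>R\<^esub> c" m] c by simp
  qed
  show "a \<oplus>\<^bsub>M\<^esub> b \<in> cyc m" if h: "a \<in> cyc m" "b \<in> cyc m" for a b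
  proof -
    obtain c where c: "c \<in> carrier R" "a = c \<odot>\<^bsub>M\<^esub> m" using cycE[OF h(1)] by blast
    obtain d where d: "d \<in> carrier R" "b = d \<odot>\<^bsub>M\<^esub> m" using cycE[OF h(2)] by blast
    have "a \<oplus>\<^bsub>M\<^esub> b = (c \<oplus>\<^bsub>R\<^esub> d) \<odot>\<^bsub>M\<^esub> m" using c d m by (simp add: smult_l_distr)
    then show ?thesis using cycI[of "c \<oplus>\<^bsub>R\<^esub> d" m] c d by simp
  qed
  show "a \<odot>\<^bsub>M\<^esub> x \<in> cyc m" if h: "a \<in> carrier R" "x \<in> cyc m" for a x
  proof -
    obtain c where c: "c \<in> carrier R" "x = c \<odot>\<^bsub>M\<^esub> m" using cycE[OF h(2)] by blast
    have "a \<odot>\<^bsub>M\<^esub> x = (a \<otimes>\<^bsub>R\<^esub> c) \<odot>\<^bsub>M\<^esub> m" using c m h(1) by (simp add: smult_assoc1)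
    then show ?thesis using cycI[of "a \<otimes>\<^bsub>R\<^esub> c" m] c h(1) by simp
  qed
qed

lemma cyc_self: "m \<in> carrier M \<Longrightarrow> m \<in> cyc m"
  using cycI[of "\<one>\<^bsub>R\<^esub>" m] by simp

definition lin where "lin J S = {finsum M (\<lambda>s. c s \<odot>\<^bsub>M\<^esub> s) S | c. c \<in> S \<rightarrow> J}"

lemma linI: "c \<in> S \<rightarrow> J \<Longrightarrow> finsum M (\<lambda>s. c s \<odot>\<^bsub>M\<^esub> s) S \<in> lin J S"
  unfolding lin_def by auto

lemma linE: "x \<in> lin J S \<Longrightarrow> \<exists>c. c \<in> S \<rightarrow> J \<and> x = finsum M (\<lambda>s. c s \<odot>\<^bsub>M\<^esub> s) S"
  unfolding lin_def by auto

lemma lin_smult_eq: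
  assumes S: "finite S" "S \<subseteq> carrier M" and c: "c \<in> S \<rightarrow> carrier R" and a: "a \<in> carrier R"
  shows "a \<odot>\<^bsub>M\<^esub> finsum M (\<lambda>s. c s \<odot>\<^bsub>M\<^esub> s) S = finsum M (\<lambda>s. (a \<otimes>\<^bsub>R\<^esub> c s) \<odot>\<^bsub>M\<^esub> s) S"
proof -
  have f: "(\<lambda>s. c s \<odot>\<^bsub>M\<^esub> s) \<in> S \<rightarrow> carrier M" using S c by auto
  have "a \<odot>\<^bsub>M\<^esub> finsum M (\<lambda>s. c s \<odot>\<^bsub>M\<^esub> s) S = finsum M (\<lambda>s. a \<odot>\<^bsub>M\<^esub> (c s \<odot>\<^bsub>M\<^esub> s)) S"
    by (rule finsum_smult_ldistr[OF S(1) a f])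
  also have "\<dots> = finsum M (\<lambda>s. (a \<otimes>\<^bsub>R\<^esub> c s) \<odot>\<^bsub>M\<^esub> s) S"
    using S c a by (intro M.finsum_cong') (auto simp: smult_assoc1 Pi_iff subset_iff)
  finally show ?thesis .
qed

lemma lin_smult:
  assumes S: "finite S" "S \<subseteq> carrier M" and J: "ideal J R" and K: "K \<subseteq> carrier R"
    and a: "a \<in> carrier R" and aK: "\<And>k. k \<in> K \<Longrightarrow> a \<otimes>\<^bsub>R\<^esub> k \<in> J" and x: "x \<in> lin K S"
  shows "a \<odot>\<^bsub>M\<^esub> x \<in> lin J S"
proof -
  obtain c where c: "c \<in> S \<rightarrow> K" "x = finsum M (\<lambda>s. c s \<odot>\<^bsub>M\<^esub> s) S" using linE[OF x] by blast
  have c': "c \<in> S \<rightarrow> carrier R" using c K by auto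
  have "a \<odot>\<^bsub>M\<^esub> x = finsum M (\<lambda>s. (a \<otimes>\<^bsub>R\<^esub> c s) \<odot>\<^bsub>M\<^esub> s) S"
    using lin_smult_eq[OF S c' a] c by simp
  moreover have "(\<lambda>s. a \<otimes>\<^bsub>R\<^esub> c s) \<in> S \<rightarrow> J" using c aK by auto
  ultimately show ?thesis using linI by simp
qed

lemma lin_sub:
  assumes S: "finite S" "S \<subseteq> carrier M" and J: "ideal J R"
  shows "submodule (lin J S) R M"
proof -
  have JR: "J \<subseteq> carrier R" by (rule additive_subgroup.a_subset[OF ideal.axioms(1)[OF J]])
  show ?thesis
  proof (rule submoduleI)
    show "lin J S \<subseteq> carrier M"
    proof
      fix x assume "x \<in> lin J S"
      then obtain c where c: "c \<in> S \<rightarrow> J" "x = finsum M (\<lambda>s. c s \<odot>\<^bsub>M\<^esub> s) S" using linE by blast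
      have "(\<lambda>s. c s \<odot>\<^bsub>M\<^esub> s) \<in> S \<rightarrow> carrier M" using c JR S by auto
      then show "x \<in> carrier M" using c M.finsum_closed by simp
    qed
    have "finsum M (\<lambda>s. (\<lambda>_. \<zero>\<^bsub>R\<^esub>) s \<odot>\<^bsub>M\<^esub> s) S = finsum M (\<lambda>_. \<zero>\<^bsub>M\<^esub>) S"
      using S by (intro M.finsum_cong') auto
    also have "\<dots> = \<zero>\<^bsub>M\<^esub>" by (rule M.finsum_zero)
    finally show "\<zero>\<^bsub>M\<^esub> \<in> lin J S"
      using linI[of "\<lambda>_. \<zero>\<^bsub>R\<^esub>" S J] additive_subgroup.zero_closed[OF ideal.axioms(1)[OF J]] by auto
    show "a \<odot>\<^bsub>M\<^esub> x \<in> lin J S" if h: "a \<in> carrier R" "x \<in> lin J S" for a x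
    proof -
      have "\<And>k. k \<in> J \<Longrightarrow> a \<otimes>\<^bsub>R\<^esub> k \<in> J" by (rule ideal.I_l_closed[OF J]) (auto simp: h)
      then show ?thesis by (rule lin_smult[OF S J JR h(1) _ h(2)])
    qed
    show "\<ominus>\<^bsub>M\<^esub> a \<in> lin J S" if a: "a \<in> lin J S" for a
    proof -
      have "a \<in> carrier M"
        using \<open>lin J S \<subseteq> carrier M\<close> a by blast
      then have "\<ominus>\<^bsub>M\<^esub> a = (\<ominus>\<^bsub>R\<^esub> \<one>\<^bsub>R\<^esub>) \<odot>\<^bsub>M\<^esub> a" by (simp add: smult_l_minus)
      moreover have "(\<ominus>\<^bsub>R\<^esub> \<one>\<^bsub>R\<^esub>) \<odot>\<^bsub>M\<^esub> a \<in> lin J S"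
      proof (rule lin_smult[OF S J JR _ _ a])
        show "\<ominus>\<^bsub>R\<^esub> \<one>\<^bsub>R\<^esub> \<in> carrier R" by simp
        show "\<And>k. k \<in> J \<Longrightarrow> (\<ominus>\<^bsub>R\<^esub> \<one>\<^bsub>R\<^esub>) \<otimes>\<^bsub>R\<^esub> k \<in> J" by (rule ideal.I_l_closed[OF J]) auto
      qed
      ultimately show ?thesis by simp
    qed
    show "a \<oplus>\<^bsub>M\<^esub> b \<in> lin J S" if a: "a \<in> lin J S" and b: "b \<in> lin J S" for a b
    proof -
      obtain c where c: "c \<in> S \<rightarrow> J" "a = finsum M (\<lambda>s. c s \<odot>\<^bsub>M\<^esub> s) S" using linE[OF a] by blast
      obtain d where d: "d \<in> S \<rightarrow> J" "b = finsum M (\<lambda>s. d s \<odot>\<^bsub>M\<^esub> s) S" using linE[OF b] by blast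
      have cc: "(\<lambda>s. c s \<odot>\<^bsub>M\<^esub> s) \<in> S \<rightarrow> carrier M" "(\<lambda>s. d s \<odot>\<^bsub>M\<^esub> s) \<in> S \<rightarrow> carrier M"
        using c d JR S by (auto simp: Pi_iff subset_iff)
      have "a \<oplus>\<^bsub>M\<^esub> b = finsum M (\<lambda>s. c s \<odot>\<^bsub>M\<^esub> s \<oplus>\<^bsub>M\<^esub> d s \<odot>\<^bsub>M\<^esub> s) S"
        using M.finsum_addf[OF cc] c d by simp
      also have "\<dots> = finsum M (\<lambda>s. (c s \<oplus>\<^bsub>R\<^esub> d s) \<odot>\<^bsub>M\<^esub> s) S"
        using c d JR S by (intro M.finsum_cong') (auto simp: smult_l_distr Pi_iff subset_iff)
      finally have eq: "a \<oplus>\<^bsub>M\<^esub> b = finsum M (\<lambda>s. (c s \<oplus>\<^bsub>R\<^esub> d s) \<odot>\<^bsub>M\<^esub> s) S" .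
      have "(\<lambda>s. c s \<oplus>\<^bsub>R\<^esub> d s) \<in> S \<rightarrow> J"
        using c d additive_subgroup.a_closed[OF ideal.axioms(1)[OF J]] by (auto simp: Pi_iff)
      then show ?thesis unfolding eq by (rule linI)
    qed
  qed
qed

lemma lin_self:
  assumes S: "finite S" "S \<subseteq> carrier M" and t: "t \<in> S"
  shows "t \<in> lin (carrier R) S"
proof -
  let ?c = "\<lambda>s. if s = t then \<one>\<^bsub>R\<^esub> else \<zero>\<^bsub>R\<^esub>"
  have "finsum M (\<lambda>s. ?c s \<odot>\<^bsub>M\<^esub> s) S = finsum M (\<lambda>s. ?c s \<odot>\<^bsub>M\<^esub> s) (insert t (S - {t}))"
    using t by (simp add: insert_absorb)
  also have "\<dots> = ?c t \<odot>\<^bsub>M\<^esub> t \<oplus>\<^bsub>M\<^esub> finsum M (\<lambda>s. ?c s \<odot>\<^bsub>M\<^esub> s) (S - {t})"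
    using S t by (intro M.finsum_insert) auto
  also have "finsum M (\<lambda>s. ?c s \<odot>\<^bsub>M\<^esub> s) (S - {t}) = finsum M (\<lambda>_. \<zero>\<^bsub>M\<^esub>) (S - {t})"
    using S by (intro M.finsum_cong') auto
  finally have "finsum M (\<lambda>s. ?c s \<odot>\<^bsub>M\<^esub> s) S = t" using S t by auto
  moreover have "?c \<in> S \<rightarrow> carrier R" by auto
  ultimately show ?thesis using linI[of ?c S "carrier R"] by simp
qed

lemma lin_kill:
  assumes S: "finite S" "S \<subseteq> carrier M" and K: "K \<subseteq> carrier R" and r: "r \<in> carrier R"
    and k: "\<And>s. s \<in> S \<Longrightarrow> r \<odot>\<^bsub>M\<^esub> s = \<zero>\<^bsub>M\<^esub>" and x: "x \<in> lin K S"
  shows "r \<odot>\<^bsub>M\<^esub> x = \<zero>\<^bsub>M\<^esub>"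
proof -
  obtain c where c: "c \<in> S \<rightarrow> K" "x = finsum M (\<lambda>s. c s \<odot>\<^bsub>M\<^esub> s) S" using linE[OF x] by blast
  have c': "c \<in> S \<rightarrow> carrier R" using c K by auto
  have "r \<odot>\<^bsub>M\<^esub> x = finsum M (\<lambda>s. (r \<otimes>\<^bsub>R\<^esub> c s) \<odot>\<^bsub>M\<^esub> s) S"
    using lin_smult_eq[OF S c' r] c by simp
  also have "\<dots> = finsum M (\<lambda>_. \<zero>\<^bsub>M\<^esub>) S"
  proof (intro M.finsum_cong')
    fix s assume s: "s \<in> S"
    then have "(r \<otimes>\<^bsub>R\<^esub> c s) \<odot>\<^bsub>M\<^esub> s = c s \<odot>\<^bsub>M\<^esub> (r \<odot>\<^bsub>M\<^esub> s)"
      using c' r S by (simp add: smult_assoc1[symmetric] R.m_comm Pi_def subset_iff)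
    then show "(r \<otimes>\<^bsub>R\<^esub> c s) \<odot>\<^bsub>M\<^esub> s = \<zero>\<^bsub>M\<^esub>" using k[OF s] c' s by (simp add: Pi_def)
  qed auto
  finally show ?thesis by simp
qed


lemma lin_subset: "finite S \<Longrightarrow> S \<subseteq> carrier M \<Longrightarrow> ideal J R \<Longrightarrow> lin J S \<subseteq> carrier M"
  using lin_sub submoduleE(1) by blast

lemma lin_insert:
  assumes T: "finite T" "insert t T \<subseteq> carrier M" "t \<notin> T" and J: "ideal J R"
    and x: "x \<in> lin J (insert t T)"
  shows "\<exists>a\<in>J. \<exists>y\<in>lin J T. x = a \<odot>\<^bsub>M\<^esub> t \<oplus>\<^bsub>M\<^esub> y"
proof -
  have JR: "J \<subseteq> carrier R" by (rule additive_subgroup.a_subset[OF ideal.axioms(1)[OF J]])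
  obtain c where c: "c \<in> insert t T \<rightarrow> J" "x = finsum M (\<lambda>s. c s \<odot>\<^bsub>M\<^esub> s) (insert t T)"
    using linE[OF x] by blast
  have "x = c t \<odot>\<^bsub>M\<^esub> t \<oplus>\<^bsub>M\<^esub> finsum M (\<lambda>s. c s \<odot>\<^bsub>M\<^esub> s) T"
    unfolding c(2) using T c JR by (intro M.finsum_insert) (auto simp: Pi_iff subset_iff)
  moreover have "finsum M (\<lambda>s. c s \<odot>\<^bsub>M\<^esub> s) T \<in> lin J T"
    using c by (intro linI) auto
  moreover have "c t \<in> J" using c by auto
  ultimately show ?thesis by blast
qed

lemma one_plus_mult: "p \<in> carrier R \<Longrightarrow> q \<in> carrier R \<Longrightarrow>
   (\<one>\<^bsub>R\<^esub> \<oplus>\<^bsub>R\<^esub> p) \<otimes>\<^bsub>R\<^esub> (\<one>\<^bsub>R\<^esub> \<oplus>\<^bsub>R\<^esub> q) = \<one>\<^bsub>R\<^esub> \<oplus>\<^bsub>R\<^esub> (p \<oplus>\<^bsub>R\<^esub> q \<oplus>\<^bsub>R\<^esub> p \<otimes>\<^bsub>R\<^esub> q)"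
  by (simp add: R.r_distr R.l_distr R.a_ac)

lemma smult_cancel: "a \<in> carrier R \<Longrightarrow> t \<in> carrier M \<Longrightarrow> y \<in> carrier M \<Longrightarrow>
   (\<ominus>\<^bsub>R\<^esub> a) \<odot>\<^bsub>M\<^esub> t \<oplus>\<^bsub>M\<^esub> (a \<odot>\<^bsub>M\<^esub> t \<oplus>\<^bsub>M\<^esub> y) = y"
  by (simp add: smult_l_minus M.a_assoc[symmetric] M.l_neg)

lemma nakayama_aux:
  assumes J: "ideal J R" and S: "finite S"
  shows "S \<subseteq> carrier M \<Longrightarrow> p \<in> J \<Longrightarrow> (\<And>u. u \<in> S \<Longrightarrow> (\<one>\<^bsub>R\<^esub> \<oplus>\<^bsub>R\<^esub> p) \<odot>\<^bsub>M\<^esub> u \<in> lin J S)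
     \<Longrightarrow> \<exists>q\<in>J. \<forall>u\<in>S. (\<one>\<^bsub>R\<^esub> \<oplus>\<^bsub>R\<^esub> q) \<odot>\<^bsub>M\<^esub> u = \<zero>\<^bsub>M\<^esub>"
  using S
proof (induction S arbitrary: p rule: finite_induct)
  case empty
  then show ?case using additive_subgroup.zero_closed[OF ideal.axioms(1)[OF J]] by blast
next
  case (insert t T)
  have JR: "J \<subseteq> carrier R" by (rule additive_subgroup.a_subset[OF ideal.axioms(1)[OF J]])
  have tc: "t \<in> carrier M" and Tc: "T \<subseteq> carrier M" using insert.prems(1) by auto
  have pc: "p \<in> carrier R" using insert.prems(2) JR by auto
  let ?s = "\<one>\<^bsub>R\<^esub> \<oplus>\<^bsub>R\<^esub> p"
  have sc: "?s \<in> carrier R" using pc by simp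
  have LT: "lin J T \<subseteq> carrier M" using lin_subset[OF insert.hyps(1) Tc J] .
  have subT: "submodule (lin J T) R M" using lin_sub[OF insert.hyps(1) Tc J] .
  obtain av yt where av: "av \<in> J" and yt: "yt \<in> lin J T" and eqt: "?s \<odot>\<^bsub>M\<^esub> t = av \<odot>\<^bsub>M\<^esub> t \<oplus>\<^bsub>M\<^esub> yt"
    using lin_insert[OF insert.hyps(1) insert.prems(1) insert.hyps(2) J insert.prems(3)] by blast
  have avc: "av \<in> carrier R" using av JR by auto
  have ytc: "yt \<in> carrier M" using yt LT by auto
  define p' where "p' = p \<oplus>\<^bsub>R\<^esub> (\<ominus>\<^bsub>R\<^esub> av)"
  have p'J: "p' \<in> J" unfolding p'_def
    using insert.prems(2) av additive_subgroup.a_closed[OF ideal.axioms(1)[OF J]]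
      additive_subgroup.a_inv_closed[OF ideal.axioms(1)[OF J]] by (simp add: a_inv_def)
  have p'c: "p' \<in> carrier R" using p'J JR by auto
  let ?t = "\<one>\<^bsub>R\<^esub> \<oplus>\<^bsub>R\<^esub> p'"
  have tauc: "?t \<in> carrier R" using p'c by simp
  have teq: "?t = ?s \<oplus>\<^bsub>R\<^esub> (\<ominus>\<^bsub>R\<^esub> av)" unfolding p'_def using pc avc by (simp add: R.a_assoc)
  have "?t \<odot>\<^bsub>M\<^esub> t = (\<ominus>\<^bsub>R\<^esub> av) \<odot>\<^bsub>M\<^esub> t \<oplus>\<^bsub>M\<^esub> ?s \<odot>\<^bsub>M\<^esub> t"
    unfolding teq using sc avc tc by (simp add: smult_l_distr M.a_comm)
  also have "\<dots> = yt" unfolding eqt using smult_cancel[OF avc tc ytc] .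
  finally have tt: "?t \<odot>\<^bsub>M\<^esub> t = yt" .
  have step: "(?t \<otimes>\<^bsub>R\<^esub> ?s) \<odot>\<^bsub>M\<^esub> u \<in> lin J T" if u: "u \<in> T" for u
  proof -
    obtain au yu where au: "au \<in> J" and yu: "yu \<in> lin J T" and equ: "?s \<odot>\<^bsub>M\<^esub> u = au \<odot>\<^bsub>M\<^esub> t \<oplus>\<^bsub>M\<^esub> yu"
      using lin_insert[OF insert.hyps(1) insert.prems(1) insert.hyps(2) J insert.prems(3)] u by blast
    have auc: "au \<in> carrier R" using au JR by auto
    have yuc: "yu \<in> carrier M" using yu LT by auto
    have uc: "u \<in> carrier M" using u Tc by auto
    have "(?t \<otimes>\<^bsub>R\<^esub> ?s) \<odot>\<^bsub>M\<^esub> u = ?t \<odot>\<^bsub>M\<^esub> (au \<odot>\<^bsub>M\<^esub> t \<oplus>\<^bsub>M\<^esub> yu)"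
      using tauc sc uc by (simp add: smult_assoc1 equ)
    also have "\<dots> = ?t \<odot>\<^bsub>M\<^esub> (au \<odot>\<^bsub>M\<^esub> t) \<oplus>\<^bsub>M\<^esub> ?t \<odot>\<^bsub>M\<^esub> yu"
      using tauc auc tc yuc by (simp add: smult_r_distr)
    also have "?t \<odot>\<^bsub>M\<^esub> (au \<odot>\<^bsub>M\<^esub> t) = au \<odot>\<^bsub>M\<^esub> (?t \<odot>\<^bsub>M\<^esub> t)"
      using tauc auc tc by (simp add: smult_assoc1[symmetric] R.m_comm)
    also have "\<dots> = au \<odot>\<^bsub>M\<^esub> yt" using tt by simp
    finally have e: "(?t \<otimes>\<^bsub>R\<^esub> ?s) \<odot>\<^bsub>M\<^esub> u = au \<odot>\<^bsub>M\<^esub> yt \<oplus>\<^bsub>M\<^esub> ?t \<odot>\<^bsub>M\<^esub> yu" .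
    have "au \<odot>\<^bsub>M\<^esub> yt \<in> lin J T" using submoduleE(4)[OF subT auc yt] .
    moreover have "?t \<odot>\<^bsub>M\<^esub> yu \<in> lin J T" using submoduleE(4)[OF subT tauc yu] .
    ultimately show ?thesis unfolding e using submoduleE(5)[OF subT] by blast
  qed
  have ts: "?t \<otimes>\<^bsub>R\<^esub> ?s = \<one>\<^bsub>R\<^esub> \<oplus>\<^bsub>R\<^esub> (p' \<oplus>\<^bsub>R\<^esub> p \<oplus>\<^bsub>R\<^esub> p' \<otimes>\<^bsub>R\<^esub> p)"
    using one_plus_mult[OF p'c pc] .
  have p''J: "p' \<oplus>\<^bsub>R\<^esub> p \<oplus>\<^bsub>R\<^esub> p' \<otimes>\<^bsub>R\<^esub> p \<in> J"
    using p'J insert.prems(2) pc additive_subgroup.a_closed[OF ideal.axioms(1)[OF J]]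
      ideal.I_r_closed[OF J] by simp
  obtain q' where q'J: "q' \<in> J" and q': "\<forall>u\<in>T. (\<one>\<^bsub>R\<^esub> \<oplus>\<^bsub>R\<^esub> q') \<odot>\<^bsub>M\<^esub> u = \<zero>\<^bsub>M\<^esub>"
    using insert.IH[OF Tc p''J] step unfolding ts by blast
  have q'c: "q' \<in> carrier R" using q'J JR by auto
  have kill: "(\<one>\<^bsub>R\<^esub> \<oplus>\<^bsub>R\<^esub> q') \<odot>\<^bsub>M\<^esub> yt = \<zero>\<^bsub>M\<^esub>"
    using lin_kill[OF insert.hyps(1) Tc JR _ _ yt] q' q'c by simp
  define q where "q = q' \<oplus>\<^bsub>R\<^esub> p' \<oplus>\<^bsub>R\<^esub> q' \<otimes>\<^bsub>R\<^esub> p'"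
  have qJ: "q \<in> J" unfolding q_def
    using p'J q'J p'c additive_subgroup.a_closed[OF ideal.axioms(1)[OF J]]
      ideal.I_r_closed[OF J] by simp
  have qeq: "\<one>\<^bsub>R\<^esub> \<oplus>\<^bsub>R\<^esub> q = (\<one>\<^bsub>R\<^esub> \<oplus>\<^bsub>R\<^esub> q') \<otimes>\<^bsub>R\<^esub> ?t"
    unfolding q_def using one_plus_mult[OF q'c p'c] by simp
  have qeq2: "\<one>\<^bsub>R\<^esub> \<oplus>\<^bsub>R\<^esub> q = ?t \<otimes>\<^bsub>R\<^esub> (\<one>\<^bsub>R\<^esub> \<oplus>\<^bsub>R\<^esub> q')"
    unfolding qeq using q'c tauc by (simp add: R.m_comm)
  have "\<forall>u\<in>insert t T. (\<one>\<^bsub>R\<^esub> \<oplus>\<^bsub>R\<^esub> q) \<odot>\<^bsub>M\<^esub> u = \<zero>\<^bsub>M\<^esub>"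
  proof
    fix u assume "u \<in> insert t T"
    then show "(\<one>\<^bsub>R\<^esub> \<oplus>\<^bsub>R\<^esub> q) \<odot>\<^bsub>M\<^esub> u = \<zero>\<^bsub>M\<^esub>"
    proof
      assume "u = t"
      then show ?thesis unfolding qeq using q'c tauc tc kill tt by (simp add: smult_assoc1)
    next
      assume u: "u \<in> T"
      then have "u \<in> carrier M" using Tc by auto
      then show ?thesis unfolding qeq2 using q'c tauc q' u by (simp add: smult_assoc1)
    qed
  qed
  then show ?case using qJ by blast
qed

lemma nakayama:
  assumes J: "ideal J R" and S: "finite S" "S \<subseteq> carrier M" and MS: "carrier M = lin (carrier R) S"
    and MJ: "carrier M \<subseteq> ideal_times_module R J M"
  shows "\<exists>q\<in>J. \<forall>x\<in>carrier M. (\<one>\<^bsub>R\<^esub> \<oplus>\<^bsub>R\<^esub> q) \<odot>\<^bsub>M\<^esub> x = \<zero>\<^bsub>M\<^esub>"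
proof -
  have JR: "J \<subseteq> carrier R" by (rule additive_subgroup.a_subset[OF ideal.axioms(1)[OF J]])
  have "ideal_times_module R J M \<subseteq> lin J S"
  proof (rule itm_least[OF lin_sub[OF S J]])
    fix a x assume a: "a \<in> J" and x: "x \<in> carrier M"
    have ac: "a \<in> carrier R" using a JR by auto
    have "\<And>k. k \<in> carrier R \<Longrightarrow> a \<otimes>\<^bsub>R\<^esub> k \<in> J" by (rule ideal.I_r_closed[OF J a])
    then show "a \<odot>\<^bsub>M\<^esub> x \<in> lin J S"
      using lin_smult[OF S J _ ac _ x[unfolded MS]] by blast
  qed
  then have MsubL: "carrier M \<subseteq> lin J S" using MJ by blast
  have "\<exists>q\<in>J. \<forall>u\<in>S. (\<one>\<^bsub>R\<^esub> \<oplus>\<^bsub>R\<^esub> q) \<odot>\<^bsub>M\<^esub> u = \<zero>\<^bsub>M\<^esub>"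
  proof (rule nakayama_aux[OF J S(1) S(2)])
    show "\<zero>\<^bsub>R\<^esub> \<in> J" using additive_subgroup.zero_closed[OF ideal.axioms(1)[OF J]] by simp
    fix u assume "u \<in> S"
    then have "u \<in> carrier M" using S by auto
    then show "(\<one>\<^bsub>R\<^esub> \<oplus>\<^bsub>R\<^esub> \<zero>\<^bsub>R\<^esub>) \<odot>\<^bsub>M\<^esub> u \<in> lin J S" using MsubL by auto
  qed
  then obtain q where q: "q \<in> J" "\<forall>u\<in>S. (\<one>\<^bsub>R\<^esub> \<oplus>\<^bsub>R\<^esub> q) \<odot>\<^bsub>M\<^esub> u = \<zero>\<^bsub>M\<^esub>" by blast
  have qc: "\<one>\<^bsub>R\<^esub> \<oplus>\<^bsub>R\<^esub> q \<in> carrier R" using q JR by auto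
  have "\<forall>x\<in>carrier M. (\<one>\<^bsub>R\<^esub> \<oplus>\<^bsub>R\<^esub> q) \<odot>\<^bsub>M\<^esub> x = \<zero>\<^bsub>M\<^esub>"
  proof
    fix x assume "x \<in> carrier M"
    then have xl: "x \<in> lin (carrier R) S" using MS by simp
    show "(\<one>\<^bsub>R\<^esub> \<oplus>\<^bsub>R\<^esub> q) \<odot>\<^bsub>M\<^esub> x = \<zero>\<^bsub>M\<^esub>"
      using lin_kill[OF S(1) S(2) subset_refl qc _ xl] q by auto
  qed
  then show ?thesis using q by blast
qed


lemma zero_submodule: "submodule {\<zero>\<^bsub>M\<^esub>} R M"
  by (rule submoduleI) auto

lemma itm_zero: "I \<subseteq> {\<zero>\<^bsub>R\<^esub>} \<Longrightarrow> ideal_times_module R I M \<subseteq> {\<zero>\<^bsub>M\<^esub>}"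
  by (rule itm_least[OF zero_submodule]) auto

lemma mult_cyc:
  assumes mm: "multiplication_module R M" and m: "m \<in> carrier M" "m \<noteq> \<zero>\<^bsub>M\<^esub>"
  shows "\<exists>I. ideal I R \<and> cyc m = ideal_times_module R I M \<and> (\<exists>a\<in>I. a \<noteq> \<zero>\<^bsub>R\<^esub>)"
proof -
  obtain I where I: "ideal I R" "cyc m = ideal_times_module R I M"
    using mm cyc_sub[OF m(1)] unfolding multiplication_module_def by blast
  have "\<exists>a\<in>I. a \<noteq> \<zero>\<^bsub>R\<^esub>"
  proof (rule ccontr)
    assume "\<not> ?thesis"
    then have "I \<subseteq> {\<zero>\<^bsub>R\<^esub>}" by blast
    then have "cyc m \<subseteq> {\<zero>\<^bsub>M\<^esub>}" using itm_zero I(2) by simp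
    then show False using cyc_self[OF m(1)] m(2) by blast
  qed
  then show ?thesis using I by blast
qed

end

locale ddmod = dmod R M + domain R for R :: "('a, 'c) ring_scheme" and M :: "('a, 'b, 'd) module_scheme"
begin

lemma torsion_free:
  assumes mm: "multiplication_module R M"
    and F: "\<forall>r\<in>carrier R. r \<noteq> \<zero>\<^bsub>R\<^esub> \<longrightarrow> (\<exists>x\<in>carrier M. r \<odot>\<^bsub>M\<^esub> x \<noteq> \<zero>\<^bsub>M\<^esub>)"
    and r: "r \<in> carrier R" "r \<noteq> \<zero>\<^bsub>R\<^esub>" and m: "m \<in> carrier M" "m \<noteq> \<zero>\<^bsub>M\<^esub>"
  shows "r \<odot>\<^bsub>M\<^esub> m \<noteq> \<zero>\<^bsub>M\<^esub>"
proof
  assume rm: "r \<odot>\<^bsub>M\<^esub> m = \<zero>\<^bsub>M\<^esub>"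
  obtain I a where I: "ideal I R" "cyc m = ideal_times_module R I M" and a: "a \<in> I" "a \<noteq> \<zero>\<^bsub>R\<^esub>"
    using mult_cyc[OF mm m] by blast
  have ac: "a \<in> carrier R" using a(1) ideal.Icarr[OF I(1)] by blast
  have ra: "r \<otimes>\<^bsub>R\<^esub> a \<noteq> \<zero>\<^bsub>R\<^esub>" using integral_iff[OF r(1) ac] r(2) a(2) by simp
  obtain x where x: "x \<in> carrier M" "(r \<otimes>\<^bsub>R\<^esub> a) \<odot>\<^bsub>M\<^esub> x \<noteq> \<zero>\<^bsub>M\<^esub>"
    using F r(1) ac ra by auto
  have "a \<odot>\<^bsub>M\<^esub> x \<in> cyc m" using I(2) itm_gen[OF a(1) x(1)] by simp
  then obtain c where c: "c \<in> carrier R" "a \<odot>\<^bsub>M\<^esub> x = c \<odot>\<^bsub>M\<^esub> m" using cycE by blast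
  have "(r \<otimes>\<^bsub>R\<^esub> a) \<odot>\<^bsub>M\<^esub> x = r \<odot>\<^bsub>M\<^esub> (c \<odot>\<^bsub>M\<^esub> m)" using r(1) ac x(1) c by (simp add: smult_assoc1)
  also have "\<dots> = c \<odot>\<^bsub>M\<^esub> (r \<odot>\<^bsub>M\<^esub> m)" using r(1) c(1) m(1) by (simp add: smult_assoc1[symmetric] m_comm)
  also have "\<dots> = \<zero>\<^bsub>M\<^esub>" using rm c(1) by simp
  finally show False using x(2) by simp
qed

lemma rank_one:
  assumes mm: "multiplication_module R M"
    and x: "x \<in> carrier M" and y: "y \<in> carrier M" "y \<noteq> \<zero>\<^bsub>M\<^esub>"
  shows "\<exists>a\<in>carrier R. a \<noteq> \<zero>\<^bsub>R\<^esub> \<and> (\<exists>b\<in>carrier R. a \<odot>\<^bsub>M\<^esub> x = b \<odot>\<^bsub>M\<^esub> y)"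
proof -
  obtain I a where I: "ideal I R" "cyc y = ideal_times_module R I M" and a: "a \<in> I" "a \<noteq> \<zero>\<^bsub>R\<^esub>"
    using mult_cyc[OF mm y] by blast
  have ac: "a \<in> carrier R" using a(1) ideal.Icarr[OF I(1)] by blast
  have "a \<odot>\<^bsub>M\<^esub> x \<in> cyc y" using I(2) itm_gen[OF a(1) x] by simp
  then show ?thesis using cycE ac a(2) by blast
qed

lemma common_denom:
  assumes mm: "multiplication_module R M" and S: "finite S"
    and x0: "x0 \<in> carrier M" "x0 \<noteq> \<zero>\<^bsub>M\<^esub>"
  shows "S \<subseteq> carrier M \<Longrightarrow> \<exists>d\<in>carrier R. d \<noteq> \<zero>\<^bsub>R\<^esub> \<and> (\<forall>s\<in>S. \<exists>g\<in>carrier R. d \<odot>\<^bsub>M\<^esub> s = g \<odot>\<^bsub>M\<^esub> x0)"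
  using S
proof (induction S rule: finite_induct)
  case empty
  then show ?case by (intro bexI[of _ "\<one>\<^bsub>R\<^esub>"]) auto
next
  case (insert t T)
  obtain d where d: "d \<in> carrier R" "d \<noteq> \<zero>\<^bsub>R\<^esub>" and dT: "\<forall>s\<in>T. \<exists>g\<in>carrier R. d \<odot>\<^bsub>M\<^esub> s = g \<odot>\<^bsub>M\<^esub> x0"
    using insert by auto
  have tc: "t \<in> carrier M" using insert.prems by auto
  obtain a b where a: "a \<in> carrier R" "a \<noteq> \<zero>\<^bsub>R\<^esub>" and b: "b \<in> carrier R" and ab: "a \<odot>\<^bsub>M\<^esub> t = b \<odot>\<^bsub>M\<^esub> x0"
    using rank_one[OF mm tc x0] by blast
  have dac: "d \<otimes>\<^bsub>R\<^esub> a \<in> carrier R" using d a by simp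
  have dan: "d \<otimes>\<^bsub>R\<^esub> a \<noteq> \<zero>\<^bsub>R\<^esub>" using integral_iff[OF d(1) a(1)] d(2) a(2) by simp
  have "\<forall>s\<in>insert t T. \<exists>g\<in>carrier R. (d \<otimes>\<^bsub>R\<^esub> a) \<odot>\<^bsub>M\<^esub> s = g \<odot>\<^bsub>M\<^esub> x0"
  proof
    fix s assume "s \<in> insert t T"
    then show "\<exists>g\<in>carrier R. (d \<otimes>\<^bsub>R\<^esub> a) \<odot>\<^bsub>M\<^esub> s = g \<odot>\<^bsub>M\<^esub> x0"
    proof
      assume "s = t"
      then have "(d \<otimes>\<^bsub>R\<^esub> a) \<odot>\<^bsub>M\<^esub> s = (d \<otimes>\<^bsub>R\<^esub> b) \<odot>\<^bsub>M\<^esub> x0"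
        using d(1) a(1) b tc x0(1) ab by (simp add: smult_assoc1)
      then show ?thesis using d(1) b by blast
    next
      assume s: "s \<in> T"
      then obtain g where g: "g \<in> carrier R" "d \<odot>\<^bsub>M\<^esub> s = g \<odot>\<^bsub>M\<^esub> x0" using dT by blast
      have sc: "s \<in> carrier M" using s insert.prems by auto
      have "(d \<otimes>\<^bsub>R\<^esub> a) \<odot>\<^bsub>M\<^esub> s = a \<odot>\<^bsub>M\<^esub> (d \<odot>\<^bsub>M\<^esub> s)"
        using d(1) a(1) sc by (simp add: smult_assoc1[symmetric] m_comm)
      also have "\<dots> = (a \<otimes>\<^bsub>R\<^esub> g) \<odot>\<^bsub>M\<^esub> x0" using g a(1) x0(1) by (simp add: smult_assoc1)
      finally show ?thesis using a(1) g(1) by blast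
    qed
  qed
  then show ?case using dac dan by blast
qed


lemma faithful_case:
  assumes mm: "multiplication_module R M" and fg: "finitely_generated_module R M"
    and nz: "carrier M \<noteq> {\<zero>\<^bsub>M\<^esub>}"
    and F: "\<forall>r\<in>carrier R. r \<noteq> \<zero>\<^bsub>R\<^esub> \<longrightarrow> (\<exists>x\<in>carrier M. r \<odot>\<^bsub>M\<^esub> x \<noteq> \<zero>\<^bsub>M\<^esub>)"
  shows "\<exists>J. ideal J R \<and> J \<noteq> {\<zero>\<^bsub>R\<^esub>} \<and> module_isomorphic R M (ideal_module R J)"
proof -
  obtain S where S: "finite S" "S \<subseteq> carrier M" "carrier M = gen_submodule R M S"
    using fg unfolding finitely_generated_module_def by blast
  obtain x0 where x0: "x0 \<in> carrier M" "x0 \<noteq> \<zero>\<^bsub>M\<^esub>" using nz M.zero_closed by blast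
  obtain d where d: "d \<in> carrier R" "d \<noteq> \<zero>\<^bsub>R\<^esub>" and dS: "\<forall>s\<in>S. \<exists>g\<in>carrier R. d \<odot>\<^bsub>M\<^esub> s = g \<odot>\<^bsub>M\<^esub> x0"
    using common_denom[OF mm S(1) x0 S(2)] by blast
  let ?N = "{x \<in> carrier M. \<exists>g\<in>carrier R. d \<odot>\<^bsub>M\<^esub> x = g \<odot>\<^bsub>M\<^esub> x0}"
  have Nsub: "submodule ?N R M"
  proof (rule submoduleI)
    show "?N \<subseteq> carrier M" by blast
    have "d \<odot>\<^bsub>M\<^esub> \<zero>\<^bsub>M\<^esub> = \<zero>\<^bsub>R\<^esub> \<odot>\<^bsub>M\<^esub> x0" using d x0 by simp
    then show "\<zero>\<^bsub>M\<^esub> \<in> ?N" by blast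
    show "\<ominus>\<^bsub>M\<^esub> a \<in> ?N" if h: "a \<in> ?N" for a
    proof -
      obtain g where g: "g \<in> carrier R" "d \<odot>\<^bsub>M\<^esub> a = g \<odot>\<^bsub>M\<^esub> x0" and ac: "a \<in> carrier M" using h by blast
      have "d \<odot>\<^bsub>M\<^esub> (\<ominus>\<^bsub>M\<^esub> a) = (\<ominus>\<^bsub>R\<^esub> g) \<odot>\<^bsub>M\<^esub> x0"
        using g d ac x0 by (simp add: smult_r_minus smult_l_minus)
      then show ?thesis using ac g by blast
    qed
    show "a \<oplus>\<^bsub>M\<^esub> b \<in> ?N" if h: "a \<in> ?N" "b \<in> ?N" for a b
    proof -
      obtain g where g: "g \<in> carrier R" "d \<odot>\<^bsub>M\<^esub> a = g \<odot>\<^bsub>M\<^esub> x0" and ac: "a \<in> carrier M" using h by blast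
      obtain g' where g': "g' \<in> carrier R" "d \<odot>\<^bsub>M\<^esub> b = g' \<odot>\<^bsub>M\<^esub> x0" and bc: "b \<in> carrier M" using h by blast
      have "d \<odot>\<^bsub>M\<^esub> (a \<oplus>\<^bsub>M\<^esub> b) = (g \<oplus>\<^bsub>R\<^esub> g') \<odot>\<^bsub>M\<^esub> x0"
        using g g' d ac bc x0 by (simp add: smult_r_distr smult_l_distr)
      then show ?thesis using ac bc g g' by blast
    qed
    show "a \<odot>\<^bsub>M\<^esub> x \<in> ?N" if h: "a \<in> carrier R" "x \<in> ?N" for a x
    proof -
      obtain g where g: "g \<in> carrier R" "d \<odot>\<^bsub>M\<^esub> x = g \<odot>\<^bsub>M\<^esub> x0" and xc: "x \<in> carrier M" using h by blast
      have "d \<odot>\<^bsub>M\<^esub> (a \<odot>\<^bsub>M\<^esub> x) = a \<odot>\<^bsub>M\<^esub> (d \<odot>\<^bsub>M\<^esub> x)"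
        using d h(1) xc by (simp add: smult_assoc1[symmetric] m_comm)
      also have "\<dots> = (a \<otimes>\<^bsub>R\<^esub> g) \<odot>\<^bsub>M\<^esub> x0" using g h(1) x0 by (simp add: smult_assoc1)
      finally show ?thesis using xc h(1) g by blast
    qed
  qed
  have allx: "\<exists>g\<in>carrier R. d \<odot>\<^bsub>M\<^esub> x = g \<odot>\<^bsub>M\<^esub> x0" if x: "x \<in> carrier M" for x
  proof -
    have "S \<subseteq> ?N" using dS S(2) by blast
    then have "carrier M \<subseteq> ?N" using gen_least[OF Nsub] S(3) by blast
    then show ?thesis using x by blast
  qed
  have uniq: "g = g'" if g: "g \<in> carrier R" "g' \<in> carrier R" "g \<odot>\<^bsub>M\<^esub> x0 = g' \<odot>\<^bsub>M\<^esub> x0" for g g'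
  proof -
    have "(g \<oplus>\<^bsub>R\<^esub> (\<ominus>\<^bsub>R\<^esub> g')) \<odot>\<^bsub>M\<^esub> x0 = \<zero>\<^bsub>M\<^esub>"
      using g x0 by (simp add: smult_l_distr smult_l_minus M.r_neg)
    moreover have gc: "g \<oplus>\<^bsub>R\<^esub> (\<ominus>\<^bsub>R\<^esub> g') \<in> carrier R" using g by simp
    ultimately have "g \<oplus>\<^bsub>R\<^esub> (\<ominus>\<^bsub>R\<^esub> g') = \<zero>\<^bsub>R\<^esub>"
      using torsion_free[OF mm F gc _ x0] by blast
    then have "\<ominus>\<^bsub>R\<^esub> (\<ominus>\<^bsub>R\<^esub> g') = g" using g by (intro R.minus_equality) auto
    then show ?thesis using g by simp
  qed
  define f where "f x = (THE g. g \<in> carrier R \<and> d \<odot>\<^bsub>M\<^esub> x = g \<odot>\<^bsub>M\<^esub> x0)" for x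
  have fP: "f x \<in> carrier R \<and> d \<odot>\<^bsub>M\<^esub> x = f x \<odot>\<^bsub>M\<^esub> x0" if x: "x \<in> carrier M" for x
  proof -
    have "\<exists>!g. g \<in> carrier R \<and> d \<odot>\<^bsub>M\<^esub> x = g \<odot>\<^bsub>M\<^esub> x0"
      using allx[OF x] uniq by metis
    then show ?thesis unfolding f_def by (rule theI')
  qed
  have f_eq: "f x = g" if x: "x \<in> carrier M" and g: "g \<in> carrier R" "d \<odot>\<^bsub>M\<^esub> x = g \<odot>\<^bsub>M\<^esub> x0" for x g
    using fP[OF x] g uniq by metis
  have f_add: "f (x \<oplus>\<^bsub>M\<^esub> y) = f x \<oplus>\<^bsub>R\<^esub> f y" if x: "x \<in> carrier M" and y: "y \<in> carrier M" for x y
  proof (rule f_eq)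
    show "x \<oplus>\<^bsub>M\<^esub> y \<in> carrier M" using x y by simp
    show "f x \<oplus>\<^bsub>R\<^esub> f y \<in> carrier R" using fP[OF x] fP[OF y] by simp
    show "d \<odot>\<^bsub>M\<^esub> (x \<oplus>\<^bsub>M\<^esub> y) = (f x \<oplus>\<^bsub>R\<^esub> f y) \<odot>\<^bsub>M\<^esub> x0"
      using fP[OF x] fP[OF y] x y d x0 by (simp add: smult_r_distr smult_l_distr)
  qed
  have f_smult: "f (a \<odot>\<^bsub>M\<^esub> x) = a \<otimes>\<^bsub>R\<^esub> f x" if a: "a \<in> carrier R" and x: "x \<in> carrier M" for a x
  proof (rule f_eq)
    show "a \<odot>\<^bsub>M\<^esub> x \<in> carrier M" using a x by simp
    show "a \<otimes>\<^bsub>R\<^esub> f x \<in> carrier R" using fP[OF x] a by simp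
    have "d \<odot>\<^bsub>M\<^esub> (a \<odot>\<^bsub>M\<^esub> x) = a \<odot>\<^bsub>M\<^esub> (d \<odot>\<^bsub>M\<^esub> x)"
      using d a x by (simp add: smult_assoc1[symmetric] m_comm)
    then show "d \<odot>\<^bsub>M\<^esub> (a \<odot>\<^bsub>M\<^esub> x) = (a \<otimes>\<^bsub>R\<^esub> f x) \<odot>\<^bsub>M\<^esub> x0"
      using fP[OF x] a x0 by (simp add: smult_assoc1)
  qed
  have f_inj: "inj_on f (carrier M)"
  proof (rule inj_onI)
    fix x y assume x: "x \<in> carrier M" and y: "y \<in> carrier M" and e: "f x = f y"
    have "d \<odot>\<^bsub>M\<^esub> x = d \<odot>\<^bsub>M\<^esub> y" using fP[OF x] fP[OF y] e by simp
    then have "d \<odot>\<^bsub>M\<^esub> (x \<oplus>\<^bsub>M\<^esub> \<ominus>\<^bsub>M\<^esub> y) = \<zero>\<^bsub>M\<^esub>"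
      using d x y by (simp add: smult_r_distr smult_r_minus M.r_neg)
    moreover have xyc: "x \<oplus>\<^bsub>M\<^esub> \<ominus>\<^bsub>M\<^esub> y \<in> carrier M" using x y by simp
    ultimately have "x \<oplus>\<^bsub>M\<^esub> \<ominus>\<^bsub>M\<^esub> y = \<zero>\<^bsub>M\<^esub>"
      using torsion_free[OF mm F d xyc] by blast
    then have "\<ominus>\<^bsub>M\<^esub> (\<ominus>\<^bsub>M\<^esub> y) = x" using x y by (intro M.minus_equality) auto
    then show "x = y" using y by simp
  qed
  let ?J = "f ` carrier M"
  have Jc: "?J \<subseteq> carrier R" using fP by blast
  have Jideal: "ideal ?J R"
  proof (rule idealI)
    show "ring R" by (rule R.ring_axioms)
    show "subgroup ?J (add_monoid R)"
    proof (rule R.add.subgroupI)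
      show "?J \<subseteq> carrier R" using Jc by simp
      show "?J \<noteq> {}" using x0 by blast
      show "\<ominus>\<^bsub>R\<^esub> a \<in> ?J" if h: "a \<in> ?J" for a
      proof -
        obtain x where x: "x \<in> carrier M" "a = f x" using h by blast
        have "f (\<ominus>\<^bsub>M\<^esub> x) = \<ominus>\<^bsub>R\<^esub> a"
        proof (rule f_eq)
          show "\<ominus>\<^bsub>M\<^esub> x \<in> carrier M" using x by simp
          show "\<ominus>\<^bsub>R\<^esub> a \<in> carrier R" using fP x by simp
          show "d \<odot>\<^bsub>M\<^esub> \<ominus>\<^bsub>M\<^esub> x = (\<ominus>\<^bsub>R\<^esub> a) \<odot>\<^bsub>M\<^esub> x0"
            using fP[OF x(1)] x d x0 by (simp add: smult_r_minus smult_l_minus)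
        qed
        then show "\<ominus>\<^bsub>R\<^esub> a \<in> ?J" using x by (metis M.a_inv_closed imageI)
      qed
      show "a \<oplus>\<^bsub>R\<^esub> b \<in> ?J" if h: "a \<in> ?J" "b \<in> ?J" for a b
      proof -
        obtain x where x: "x \<in> carrier M" "a = f x" using h by blast
        obtain y where y: "y \<in> carrier M" "b = f y" using h by blast
        have "a \<oplus>\<^bsub>R\<^esub> b = f (x \<oplus>\<^bsub>M\<^esub> y)" using f_add x y by simp
        then show ?thesis using x y by (simp add: image_iff) (metis M.a_closed)
      qed
    qed
    show "x \<otimes>\<^bsub>R\<^esub> a \<in> ?J" if h: "a \<in> ?J" "x \<in> carrier R" for a x
    proof -
      obtain y where y: "y \<in> carrier M" "a = f y" using h by blast
      have "x \<otimes>\<^bsub>R\<^esub> a = f (x \<odot>\<^bsub>M\<^esub> y)" using f_smult h(2) y by simp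
      then show ?thesis using h(2) y by (metis smult_closed imageI)
    qed
    show "a \<otimes>\<^bsub>R\<^esub> x \<in> ?J" if h: "a \<in> ?J" "x \<in> carrier R" for a x
    proof -
      obtain y where y: "y \<in> carrier M" "a = f y" using h by blast
      have "a \<otimes>\<^bsub>R\<^esub> x = f (x \<odot>\<^bsub>M\<^esub> y)" using f_smult h(2) y fP m_comm by simp
      then show ?thesis using h(2) y by (metis smult_closed imageI)
    qed
  qed
  have Jnz: "?J \<noteq> {\<zero>\<^bsub>R\<^esub>}"
  proof
    assume "?J = {\<zero>\<^bsub>R\<^esub>}"
    then have "f x0 = \<zero>\<^bsub>R\<^esub>" using x0 by blast
    moreover have "f x0 = d" using f_eq[OF x0(1) d(1)] by simp
    ultimately show False using d by simp
  qed
  have "module_iso R M (ideal_module R ?J) f"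
    unfolding module_iso_def
  proof (intro conjI ballI)
    show "bij_betw f (carrier M) (carrier (ideal_module R ?J))"
      using f_inj unfolding bij_betw_def ideal_module_def by simp
    show "f (x \<oplus>\<^bsub>M\<^esub> y) = f x \<oplus>\<^bsub>ideal_module R ?J\<^esub> f y" if "x \<in> carrier M" "y \<in> carrier M" for x y
      using f_add[OF that] unfolding ideal_module_def by simp
    show "f (a \<odot>\<^bsub>M\<^esub> x) = a \<odot>\<^bsub>ideal_module R ?J\<^esub> f x" if "a \<in> carrier R" "x \<in> carrier M" for a x
      using f_smult[OF that] unfolding ideal_module_def by simp
  qed
  then show ?thesis using Jideal Jnz unfolding module_isomorphic_def by blast
qed

end

context noetherian_domain
begin

definition pp where
  "pp I \<longleftrightarrow> (\<exists>Ps. (\<forall>P\<in>set Ps. primeideal P R \<and> I \<subseteq> P) \<and>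
      (\<forall>xs. list_all2 (\<lambda>x P. x \<in> P) xs Ps \<longrightarrow> foldr (\<otimes>) xs \<one> \<in> I))"

lemma lprod_closed: "set xs \<subseteq> carrier R \<Longrightarrow> foldr (\<otimes>) xs \<one> \<in> carrier R"
  by (induction xs) auto

lemma lprod_append: "set xs \<subseteq> carrier R \<Longrightarrow> set ys \<subseteq> carrier R \<Longrightarrow>
    foldr (\<otimes>) (xs @ ys) \<one> = foldr (\<otimes>) xs \<one> \<otimes> foldr (\<otimes>) ys \<one>"
  by (induction xs) (auto simp: lprod_closed m_assoc)

lemma la2_carrier: "list_all2 (\<lambda>x P. x \<in> P) xs Ps \<Longrightarrow> (\<forall>P\<in>set Ps. P \<subseteq> carrier R) \<Longrightarrow> set xs \<subseteq> carrier R"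
  by (induction rule: list_all2_induct) auto

lemma pp_all: "ideal I R \<Longrightarrow> pp I"
proof (rule ccontr)
  assume I: "ideal I R" and nI: "\<not> pp I"
  define F where "F = {I. ideal I R \<and> \<not> pp I}"
  have "\<exists>B\<in>F. \<forall>Y\<in>F. B \<subseteq> Y \<longrightarrow> Y = B"
  proof (rule subset_Zorn_nonempty)
    show "F \<noteq> {}" using I nI unfolding F_def by blast
    fix C assume C: "C \<noteq> {}" "subset.chain F C"
    have "subset.chain {I. ideal I R} C" using C(2) unfolding pred_on.chain_def F_def by blast
    then have "\<Union>C \<in> C" using ideal_chain_is_trivial C(1) by blast
    then show "\<Union>C \<in> F" using C(2) unfolding pred_on.chain_def F_def by blast
  qed
  then obtain B where B: "ideal B R" "\<not> pp B" and Bmax: "\<And>Y. ideal Y R \<Longrightarrow> \<not> pp Y \<Longrightarrow> B \<subseteq> Y \<Longrightarrow> Y = B"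
    unfolding F_def by blast
  have "pp (carrier R)" unfolding pp_def
    by (rule exI[of _ "[]"]) auto
  then have Bne: "carrier R \<noteq> B" using B(2) by auto
  have "\<not> primeideal B R"
  proof
    assume P: "primeideal B R"
    have "pp B" unfolding pp_def
    proof (rule exI[of _ "[B]"], intro conjI allI impI)
      show "\<forall>P\<in>set [B]. primeideal P R \<and> B \<subseteq> P" using P by simp
      fix xs assume "list_all2 (\<lambda>x P. x \<in> P) xs [B]"
      then obtain x where "xs = [x]" "x \<in> B" by (cases xs) auto
      then show "foldr (\<otimes>) xs \<one> \<in> B" using ideal.Icarr[OF B(1)] by simp
    qed
    then show False using B(2) by simp
  qed
  then obtain a b where ab: "a \<in> carrier R" "b \<in> carrier R" "a \<otimes> b \<in> B" "a \<notin> B" "b \<notin> B"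
    using ideal.primeidealCD[OF B(1) is_cring] Bne by blast
  have BR: "B \<subseteq> carrier R" using ideal.Icarr[OF B(1)] by blast
  let ?Ba = "Idl (insert a B)" and ?Bb = "Idl (insert b B)"
  have Ba: "ideal ?Ba R" using genideal_ideal BR ab by auto
  have Bb: "ideal ?Bb R" using genideal_ideal BR ab by auto
  have Bas: "insert a B \<subseteq> ?Ba" by (rule genideal_self) (use BR ab in auto)
  have Bbs: "insert b B \<subseteq> ?Bb" by (rule genideal_self) (use BR ab in auto)
  have ppa: "pp ?Ba"
  proof (rule ccontr)
    assume "\<not> pp ?Ba"
    then have "?Ba = B" using Bmax[OF Ba] Bas by blast
    then show False using Bas ab(4) by blast
  qed
  have ppb: "pp ?Bb"
  proof (rule ccontr)
    assume "\<not> pp ?Bb"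
    then have "?Bb = B" using Bmax[OF Bb] Bbs by blast
    then show False using Bbs ab(5) by blast
  qed
  have aBb: "?Bb \<subseteq> {y \<in> carrier R. a \<otimes> y \<in> B}"
  proof (rule genideal_minimal)
    show "ideal {y \<in> carrier R. a \<otimes> y \<in> B} R" by (rule ideal.helper_max_prime[OF B(1) is_cring ab(1)])
    show "insert b B \<subseteq> {y \<in> carrier R. a \<otimes> y \<in> B}"
      using ab BR ideal.I_r_closed[OF B(1)] m_comm by auto
  qed
  have prod: "x \<otimes> y \<in> B" if x: "x \<in> ?Ba" and y: "y \<in> ?Bb" for x y
  proof -
    have yc: "y \<in> carrier R" using y aBb by auto
    have "?Ba \<subseteq> {x \<in> carrier R. y \<otimes> x \<in> B}"
    proof (rule genideal_minimal)
      show "ideal {x \<in> carrier R. y \<otimes> x \<in> B} R" by (rule ideal.helper_max_prime[OF B(1) is_cring yc])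
      show "insert a B \<subseteq> {x \<in> carrier R. y \<otimes> x \<in> B}"
        using ab BR ideal.I_l_closed[OF B(1)] yc aBb y m_comm by auto
    qed
    then show ?thesis using x yc m_comm by auto
  qed
  obtain Psa where Psa: "\<forall>P\<in>set Psa. primeideal P R \<and> ?Ba \<subseteq> P"
    "\<forall>xs. list_all2 (\<lambda>x P. x \<in> P) xs Psa \<longrightarrow> foldr (\<otimes>) xs \<one> \<in> ?Ba"
    using ppa unfolding pp_def by blast
  obtain Psb where Psb: "\<forall>P\<in>set Psb. primeideal P R \<and> ?Bb \<subseteq> P"
    "\<forall>xs. list_all2 (\<lambda>x P. x \<in> P) xs Psb \<longrightarrow> foldr (\<otimes>) xs \<one> \<in> ?Bb"
    using ppb unfolding pp_def by blast
  have "pp B" unfolding pp_def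
  proof (rule exI[of _ "Psa @ Psb"], intro conjI allI impI)
    show "\<forall>P\<in>set (Psa @ Psb). primeideal P R \<and> B \<subseteq> P"
    proof
      fix P assume P: "P \<in> set (Psa @ Psb)"
      show "primeideal P R \<and> B \<subseteq> P"
      proof (cases "P \<in> set Psa")
        case True
        then have "primeideal P R" "?Ba \<subseteq> P" using Psa(1) by auto
        then show ?thesis using Bas by blast
      next
        case False
        then have "P \<in> set Psb" using P by simp
        then have "primeideal P R" "?Bb \<subseteq> P" using Psb(1) by auto
        then show ?thesis using Bbs by blast
      qed
    qed
    fix xs assume "list_all2 (\<lambda>x P. x \<in> P) xs (Psa @ Psb)"
    then obtain us vs where uv: "xs = us @ vs" "list_all2 (\<lambda>x P. x \<in> P) us Psa" "list_all2 (\<lambda>x P. x \<in> P) vs Psb"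
      unfolding list_all2_append2 by blast
    have prc: "P \<subseteq> carrier R" if "primeideal P R" for P
      using additive_subgroup.a_subset[OF ideal.axioms(1)[OF primeideal.axioms(1)[OF that]]] .
    have pc: "\<forall>P\<in>set Psa. P \<subseteq> carrier R" "\<forall>P\<in>set Psb. P \<subseteq> carrier R"
      using Psa(1) Psb(1) prc by auto
    have uc: "set us \<subseteq> carrier R" using la2_carrier[OF uv(2) pc(1)] .
    have vc: "set vs \<subseteq> carrier R" using la2_carrier[OF uv(3) pc(2)] .
    show "foldr (\<otimes>) xs \<one> \<in> B"
    proof -
      have "foldr (\<otimes>) us \<one> \<in> ?Ba" using Psa(2) uv(2) by simp
      moreover have "foldr (\<otimes>) vs \<one> \<in> ?Bb" using Psb(2) uv(3) by simp
      ultimately show ?thesis unfolding uv(1) lprod_append[OF uc vc] by (rule prod)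
    qed
  qed
  then show False using B(2) by simp
qed

end

context ddmod
begin

lemma max_comb:
  assumes Q: "maximalideal Q R" and f: "f \<in> carrier R" "f \<notin> Q"
  shows "\<exists>c\<in>carrier R. \<exists>q\<in>Q. \<one>\<^bsub>R\<^esub> = q \<oplus>\<^bsub>R\<^esub> c \<otimes>\<^bsub>R\<^esub> f"
proof -
  have QI: "ideal Q R" using Q maximalideal.axioms(1) by blast
  have QR: "Q \<subseteq> carrier R" by (rule additive_subgroup.a_subset[OF ideal.axioms(1)[OF QI]])
  let ?K = "Q <+>\<^bsub>R\<^esub> PIdl\<^bsub>R\<^esub> f"
  have K: "ideal ?K R" by (rule add_ideals[OF QI cgenideal_ideal[OF f(1)]])
  have KR: "?K \<subseteq> carrier R" by (rule additive_subgroup.a_subset[OF ideal.axioms(1)[OF K]])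
  have Kdef: "?K = (\<Union>h\<in>Q. \<Union>k\<in>PIdl\<^bsub>R\<^esub> f. {h \<oplus>\<^bsub>R\<^esub> k})" by (simp add: set_add_def')
  have QK: "Q \<subseteq> ?K"
  proof
    fix q assume q: "q \<in> Q"
    have "\<zero>\<^bsub>R\<^esub> \<otimes>\<^bsub>R\<^esub> f \<in> PIdl\<^bsub>R\<^esub> f" unfolding cgenideal_def by blast
    moreover have "q = q \<oplus>\<^bsub>R\<^esub> \<zero>\<^bsub>R\<^esub> \<otimes>\<^bsub>R\<^esub> f" using q QR f by auto
    ultimately show "q \<in> ?K" unfolding Kdef using q by blast
  qed
  have fK: "f \<in> ?K"
  proof -
    have "\<one>\<^bsub>R\<^esub> \<otimes>\<^bsub>R\<^esub> f \<in> PIdl\<^bsub>R\<^esub> f" unfolding cgenideal_def by blast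
    moreover have "f = \<zero>\<^bsub>R\<^esub> \<oplus>\<^bsub>R\<^esub> \<one>\<^bsub>R\<^esub> \<otimes>\<^bsub>R\<^esub> f" using f by auto
    moreover have "\<zero>\<^bsub>R\<^esub> \<in> Q" using additive_subgroup.zero_closed[OF ideal.axioms(1)[OF QI]] .
    ultimately show ?thesis unfolding Kdef by blast
  qed
  have "?K = Q \<or> ?K = carrier R" using maximalideal.I_maximal[OF Q K QK KR] .
  then have "?K = carrier R" using fK f(2) by blast
  then have "\<one>\<^bsub>R\<^esub> \<in> ?K" by simp
  then obtain q k where qk: "q \<in> Q" "k \<in> PIdl\<^bsub>R\<^esub> f" "\<one>\<^bsub>R\<^esub> = q \<oplus>\<^bsub>R\<^esub> k" unfolding Kdef by blast
  then obtain c where "c \<in> carrier R" "k = c \<otimes>\<^bsub>R\<^esub> f" unfolding cgenideal_def by blast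
  then show ?thesis using qk by blast
qed

lemma avoid:
  assumes Q: "maximalideal Q R" and fin: "finite Ps"
  shows "(\<forall>P\<in>Ps. maximalideal P R) \<Longrightarrow> Q \<notin> Ps \<Longrightarrow> \<exists>f\<in>carrier R. f \<notin> Q \<and> (\<forall>P\<in>Ps. f \<in> P)"
  using fin
proof (induction Ps rule: finite_induct)
  case empty
  have "\<one>\<^bsub>R\<^esub> \<notin> Q"
  proof
    assume "\<one>\<^bsub>R\<^esub> \<in> Q"
    then have "Q = carrier R" using ideal.one_imp_carrier[OF maximalideal.axioms(1)[OF Q]] by blast
    then show False using maximalideal.I_notcarr[OF Q] by simp
  qed
  then show ?case by (intro bexI[of _ "\<one>\<^bsub>R\<^esub>"]) auto
next
  case (insert P Ps)
  have h1: "\<forall>P\<in>Ps. maximalideal P R" "Q \<notin> Ps" using insert.prems by auto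
  obtain f where f: "f \<in> carrier R" "f \<notin> Q" "\<forall>P\<in>Ps. f \<in> P" using insert.IH[OF h1] by blast
  have PM: "maximalideal P R" using insert.prems by auto
  have PI: "ideal P R" using PM maximalideal.axioms(1) by blast
  have QI: "ideal Q R" using Q maximalideal.axioms(1) by blast
  have QR: "Q \<subseteq> carrier R" by (rule additive_subgroup.a_subset[OF ideal.axioms(1)[OF QI]])
  have "\<not> P \<subseteq> Q"
  proof
    assume PQ: "P \<subseteq> Q"
    have "Q = P \<or> Q = carrier R" using maximalideal.I_maximal[OF PM QI PQ QR] .
    then show False using insert.prems(2) maximalideal.I_notcarr[OF Q] by auto
  qed
  then obtain a where a: "a \<in> P" "a \<notin> Q" by blast
  have ac: "a \<in> carrier R" using a(1) ideal.Icarr[OF PI] by blast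
  have QP: "primeideal Q R" using maximalideal_prime[OF Q] .
  have "f \<otimes>\<^bsub>R\<^esub> a \<notin> Q" using primeideal.I_prime[OF QP f(1) ac] f(2) a(2) by blast
  moreover have "f \<otimes>\<^bsub>R\<^esub> a \<in> P" using ideal.I_l_closed[OF PI a(1) f(1)] .
  moreover have "\<forall>P'\<in>Ps. f \<otimes>\<^bsub>R\<^esub> a \<in> P'"
  proof
    fix P' assume P': "P' \<in> Ps"
    have "maximalideal P' R" using insert.prems P' by auto
    then have P'I: "ideal P' R" using maximalideal.axioms(1) by blast
    have "f \<in> P'" using f(3) P' by blast
    then show "f \<otimes>\<^bsub>R\<^esub> a \<in> P'" using ideal.I_r_closed[OF P'I _ ac] by blast
  qed
  ultimately show ?case using f(1) ac by (intro bexI[of _ "f \<otimes>\<^bsub>R\<^esub> a"]) auto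
qed


lemma itm_sub': "ideal P R \<Longrightarrow> submodule (ideal_times_module R P M) R M"
  by (rule itm_sub[OF additive_subgroup.a_subset[OF ideal.axioms(1)]])

lemma combine:
  assumes notPM: "\<And>P. P \<in> PP \<Longrightarrow> \<exists>mP\<in>carrier M. mP \<notin> ideal_times_module R P M"
    and maxs: "\<And>P. P \<in> PP \<Longrightarrow> maximalideal P R"
    and fin: "finite Ps"
  shows "Ps \<subseteq> PP \<Longrightarrow> \<exists>m\<in>carrier M. \<forall>P\<in>Ps. m \<notin> ideal_times_module R P M"
  using fin
proof (induction Ps rule: finite_induct)
  case empty
  then show ?case using M.zero_closed by blast
next
  case (insert Q Ps)
  have h1: "Ps \<subseteq> PP" using insert.prems by auto
  obtain m' where m': "m' \<in> carrier M" "\<forall>P\<in>Ps. m' \<notin> ideal_times_module R P M"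
    using insert.IH[OF h1] by blast
  show ?case
  proof (cases "m' \<in> ideal_times_module R Q M")
    case False
    then show ?thesis using m' by blast
  next
    case True
    have QPP: "Q \<in> PP" using insert.prems by auto
    have QM: "maximalideal Q R" using maxs[OF QPP] .
    have QI: "ideal Q R" using QM maximalideal.axioms(1) by blast
    obtain mQ where mQ: "mQ \<in> carrier M" "mQ \<notin> ideal_times_module R Q M" using notPM[OF QPP] by blast
    have mx: "\<forall>P\<in>Ps. maximalideal P R" using maxs h1 by blast
    obtain f where f: "f \<in> carrier R" "f \<notin> Q" "\<forall>P\<in>Ps. f \<in> P"
      using avoid[OF QM insert.hyps(1) mx insert.hyps(2)] by blast
    let ?y = "f \<odot>\<^bsub>M\<^esub> mQ"
    have yc: "?y \<in> carrier M" using f(1) mQ(1) by simp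
    define m where "m = m' \<oplus>\<^bsub>M\<^esub> ?y"
    have mc: "m \<in> carrier M" unfolding m_def using m'(1) yc by simp
    have mback: "m' = m \<oplus>\<^bsub>M\<^esub> \<ominus>\<^bsub>M\<^esub> ?y" unfolding m_def using m'(1) yc
      by (simp add: M.a_assoc M.r_neg)
    have mfwd: "?y = \<ominus>\<^bsub>M\<^esub> m' \<oplus>\<^bsub>M\<^esub> m" unfolding m_def using m'(1) yc
      by (simp add: M.a_assoc[symmetric] M.l_neg)
    have "\<forall>P\<in>insert Q Ps. m \<notin> ideal_times_module R P M"
    proof
      fix P assume P: "P \<in> insert Q Ps"
      show "m \<notin> ideal_times_module R P M"
      proof
        assume mP: "m \<in> ideal_times_module R P M"
        show False
        proof (cases "P = Q")
          case True
          have sub: "submodule (ideal_times_module R Q M) R M" using itm_sub'[OF QI] .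
          have "?y \<in> ideal_times_module R Q M"
            unfolding mfwd using mP True submoduleE(3,5)[OF sub] \<open>m' \<in> ideal_times_module R Q M\<close> by blast
          obtain c q where cq: "c \<in> carrier R" "q \<in> Q" "\<one>\<^bsub>R\<^esub> = q \<oplus>\<^bsub>R\<^esub> c \<otimes>\<^bsub>R\<^esub> f"
            using max_comb[OF QM f(1) f(2)] by blast
          have qc: "q \<in> carrier R" using cq(2) ideal.Icarr[OF QI] by blast
          have "mQ = (q \<oplus>\<^bsub>R\<^esub> c \<otimes>\<^bsub>R\<^esub> f) \<odot>\<^bsub>M\<^esub> mQ" using cq(3)[symmetric] mQ(1) by simp
          also have "\<dots> = q \<odot>\<^bsub>M\<^esub> mQ \<oplus>\<^bsub>M\<^esub> c \<odot>\<^bsub>M\<^esub> ?y"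
            using qc cq(1) f(1) mQ(1) by (simp add: smult_l_distr smult_assoc1)
          finally have eq: "mQ = q \<odot>\<^bsub>M\<^esub> mQ \<oplus>\<^bsub>M\<^esub> c \<odot>\<^bsub>M\<^esub> ?y" .
          have "q \<odot>\<^bsub>M\<^esub> mQ \<in> ideal_times_module R Q M" using itm_gen[OF cq(2) mQ(1)] .
          moreover have "c \<odot>\<^bsub>M\<^esub> ?y \<in> ideal_times_module R Q M"
            using submoduleE(4)[OF sub cq(1) \<open>?y \<in> ideal_times_module R Q M\<close>] .
          ultimately have "mQ \<in> ideal_times_module R Q M"
            using eq submoduleE(5)[OF sub] by metis
          then show False using mQ(2) by blast
        next
          case False
          then have P': "P \<in> Ps" using P by blast
          have PI: "ideal P R" using mx P' maximalideal.axioms(1) by blast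
          have sub: "submodule (ideal_times_module R P M) R M" using itm_sub'[OF PI] .
          have "?y \<in> ideal_times_module R P M" using itm_gen[OF _ mQ(1)] f(3) P' by blast
          then have "m' \<in> ideal_times_module R P M"
            unfolding mback using mP submoduleE(3,5)[OF sub] by blast
          then show False using m'(2) P' by blast
        qed
      qed
    qed
    then show ?thesis using mc by blast
  qed
qed


lemma lprod_closed': "set xs \<subseteq> carrier R \<Longrightarrow> foldr (\<otimes>\<^bsub>R\<^esub>) xs \<one>\<^bsub>R\<^esub> \<in> carrier R"
  by (induction xs) auto

lemma torsion_case:
  assumes mm: "multiplication_module R M" and fg: "finitely_generated_module R M"
    and nz: "carrier M \<noteq> {\<zero>\<^bsub>M\<^esub>}" and noeth: "noetherian_domain R"
    and dim1: "\<forall>P. primeideal P R \<and> P \<noteq> {\<zero>\<^bsub>R\<^esub>} \<longrightarrow> maximalideal P R"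
    and T: "\<exists>r\<in>carrier R. r \<noteq> \<zero>\<^bsub>R\<^esub> \<and> (\<forall>x\<in>carrier M. r \<odot>\<^bsub>M\<^esub> x = \<zero>\<^bsub>M\<^esub>)"
  shows "\<exists>I. ideal I R \<and> I \<noteq> {\<zero>\<^bsub>R\<^esub>} \<and> module_isomorphic R M (quotient_module R I)"
proof -
  define A where "A = {r \<in> carrier R. \<forall>x\<in>carrier M. r \<odot>\<^bsub>M\<^esub> x = \<zero>\<^bsub>M\<^esub>}"
  have AR: "A \<subseteq> carrier R" unfolding A_def by blast
  have Aideal: "ideal A R"
  proof (rule idealI)
    show "ring R" by (rule R.ring_axioms)
    show "subgroup A (add_monoid R)"
    proof (rule R.add.subgroupI)
      show "A \<subseteq> carrier R" using AR .
      have "\<zero>\<^bsub>R\<^esub> \<in> A" unfolding A_def by simp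
      then show "A \<noteq> {}" by blast
      show "\<ominus>\<^bsub>R\<^esub> a \<in> A" if h: "a \<in> A" for a
        using h unfolding A_def by (simp add: smult_l_minus)
      show "a \<oplus>\<^bsub>R\<^esub> b \<in> A" if h: "a \<in> A" "b \<in> A" for a b
        using h unfolding A_def by (simp add: smult_l_distr)
    qed
    show "x \<otimes>\<^bsub>R\<^esub> a \<in> A" if h: "a \<in> A" "x \<in> carrier R" for a x
      using h unfolding A_def by (simp add: smult_assoc1)
    show "a \<otimes>\<^bsub>R\<^esub> x \<in> A" if h: "a \<in> A" "x \<in> carrier R" for a x
      using h unfolding A_def by (simp add: smult_assoc1)
  qed
  obtain r where r: "r \<in> A" "r \<noteq> \<zero>\<^bsub>R\<^esub>" using T unfolding A_def by blast
  have Anz: "A \<noteq> {\<zero>\<^bsub>R\<^esub>}" using r by blast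
  obtain Ps where Ps: "\<forall>P\<in>set Ps. primeideal P R \<and> A \<subseteq> P"
    "\<forall>xs. list_all2 (\<lambda>x P. x \<in> P) xs Ps \<longrightarrow> foldr (\<otimes>\<^bsub>R\<^esub>) xs \<one>\<^bsub>R\<^esub> \<in> A"
    using noetherian_domain.pp_all[OF noeth Aideal] unfolding noetherian_domain.pp_def[OF noeth] by blast
  have Pmax: "maximalideal P R" if P: "P \<in> set Ps" for P
  proof -
    have "primeideal P R" "A \<subseteq> P" using Ps(1) P by auto
    moreover have "P \<noteq> {\<zero>\<^bsub>R\<^esub>}" using r \<open>A \<subseteq> P\<close> by blast
    ultimately show ?thesis using dim1 by blast
  qed
  have PI: "ideal P R" if "P \<in> set Ps" for P using Pmax[OF that] maximalideal.axioms(1) by blast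
  have PR: "P \<subseteq> carrier R" if "P \<in> set Ps" for P
    by (rule additive_subgroup.a_subset[OF ideal.axioms(1)[OF PI[OF that]]])
  obtain S where S: "finite S" "S \<subseteq> carrier M" "carrier M = gen_submodule R M S"
    using fg unfolding finitely_generated_module_def by blast
  have MS: "carrier M = lin (carrier R) S"
  proof
    have "S \<subseteq> lin (carrier R) S" using lin_self[OF S(1) S(2)] by blast
    then show "carrier M \<subseteq> lin (carrier R) S"
      using gen_least[OF lin_sub[OF S(1) S(2) R.oneideal]] S(3) by blast
    show "lin (carrier R) S \<subseteq> carrier M" by (rule lin_subset[OF S(1) S(2) R.oneideal])
  qed
  have notPM: "\<exists>mP\<in>carrier M. mP \<notin> ideal_times_module R P M" if P: "P \<in> set Ps" for P
  proof (rule ccontr)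
    assume "\<not> ?thesis"
    then have "carrier M \<subseteq> ideal_times_module R P M" by blast
    then obtain q where q: "q \<in> P" "\<forall>x\<in>carrier M. (\<one>\<^bsub>R\<^esub> \<oplus>\<^bsub>R\<^esub> q) \<odot>\<^bsub>M\<^esub> x = \<zero>\<^bsub>M\<^esub>"
      using nakayama[OF PI[OF P] S(1) S(2) MS] by blast
    have qc: "q \<in> carrier R" using q(1) PR[OF P] by blast
    have "\<one>\<^bsub>R\<^esub> \<oplus>\<^bsub>R\<^esub> q \<in> A" unfolding A_def using q(2) qc by simp
    then have e1: "\<one>\<^bsub>R\<^esub> \<oplus>\<^bsub>R\<^esub> q \<in> P" using Ps(1) P by blast
    have "\<ominus>\<^bsub>R\<^esub> q \<in> P" using q(1) additive_subgroup.a_inv_closed[OF ideal.axioms(1)[OF PI[OF P]]] by simp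
    then have "(\<one>\<^bsub>R\<^esub> \<oplus>\<^bsub>R\<^esub> q) \<oplus>\<^bsub>R\<^esub> \<ominus>\<^bsub>R\<^esub> q \<in> P"
      using e1 additive_subgroup.a_closed[OF ideal.axioms(1)[OF PI[OF P]]] by simp
    moreover have "(\<one>\<^bsub>R\<^esub> \<oplus>\<^bsub>R\<^esub> q) \<oplus>\<^bsub>R\<^esub> \<ominus>\<^bsub>R\<^esub> q = \<one>\<^bsub>R\<^esub>" using qc by (simp add: R.a_assoc R.r_neg)
    ultimately have "\<one>\<^bsub>R\<^esub> \<in> P" by simp
    then have "P = carrier R" using ideal.one_imp_carrier[OF PI[OF P]] by blast
    then show False using maximalideal.I_notcarr[OF Pmax[OF P]] by simp
  qed
  obtain m where m: "m \<in> carrier M" "\<forall>P\<in>set Ps. m \<notin> ideal_times_module R P M"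
    using combine[of "set Ps" "set Ps"] notPM Pmax by blast
  obtain I where I: "ideal I R" "cyc m = ideal_times_module R I M"
    using mm cyc_sub[OF m(1)] unfolding multiplication_module_def by blast
  have IR: "I \<subseteq> carrier R" by (rule additive_subgroup.a_subset[OF ideal.axioms(1)[OF I(1)]])
  have comb: "\<exists>y p. y \<in> I \<and> p \<in> P \<and> \<one>\<^bsub>R\<^esub> = y \<oplus>\<^bsub>R\<^esub> p" if P: "P \<in> set Ps" for P
  proof -
    have "\<not> I \<subseteq> P"
    proof
      assume "I \<subseteq> P"
      then have "cyc m \<subseteq> ideal_times_module R P M" using I(2) itm_mono[OF PR[OF P]] by simp
      then show False using cyc_self[OF m(1)] m(2) P by blast
    qed
    then obtain y0 where y0: "y0 \<in> I" "y0 \<notin> P" by blast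
    have y0c: "y0 \<in> carrier R" using y0(1) IR by blast
    obtain c q where cq: "c \<in> carrier R" "q \<in> P" "\<one>\<^bsub>R\<^esub> = q \<oplus>\<^bsub>R\<^esub> c \<otimes>\<^bsub>R\<^esub> y0"
      using max_comb[OF Pmax[OF P] y0c y0(2)] by blast
    have "c \<otimes>\<^bsub>R\<^esub> y0 \<in> I" using ideal.I_l_closed[OF I(1) y0(1) cq(1)] .
    moreover have "\<one>\<^bsub>R\<^esub> = c \<otimes>\<^bsub>R\<^esub> y0 \<oplus>\<^bsub>R\<^esub> q"
      using cq PR[OF P] y0c by (simp add: R.a_comm subset_iff)
    ultimately show ?thesis using cq(2) by blast
  qed
  then have "\<forall>P\<in>set Ps. \<exists>yp. fst yp \<in> I \<and> snd yp \<in> P \<and> \<one>\<^bsub>R\<^esub> = fst yp \<oplus>\<^bsub>R\<^esub> snd yp" by force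
  then have "\<exists>g. \<forall>P\<in>set Ps. fst (g P) \<in> I \<and> snd (g P) \<in> P \<and> \<one>\<^bsub>R\<^esub> = fst (g P) \<oplus>\<^bsub>R\<^esub> snd (g P)"
    by (rule bchoice)
  then obtain g where g: "\<forall>P\<in>set Ps. fst (g P) \<in> I \<and> snd (g P) \<in> P \<and> \<one>\<^bsub>R\<^esub> = fst (g P) \<oplus>\<^bsub>R\<^esub> snd (g P)"
    by (elim exE)
  define pf where "pf P = snd (g P)" for P
  define yf where "yf P = fst (g P)" for P
  have gP: "yf P \<in> I" "pf P \<in> P" "\<one>\<^bsub>R\<^esub> = yf P \<oplus>\<^bsub>R\<^esub> pf P" if "P \<in> set Ps" for P
    using g that unfolding pf_def yf_def by auto
  have lst: "set L \<subseteq> set Ps \<Longrightarrow> \<exists>y\<in>I. \<one>\<^bsub>R\<^esub> = foldr (\<otimes>\<^bsub>R\<^esub>) (map pf L) \<one>\<^bsub>R\<^esub> \<oplus>\<^bsub>R\<^esub> y" for L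
  proof (induction L)
    case Nil
    have "\<zero>\<^bsub>R\<^esub> \<in> I" using additive_subgroup.zero_closed[OF ideal.axioms(1)[OF I(1)]] .
    then show ?case by (intro bexI[of _ "\<zero>\<^bsub>R\<^esub>"]) auto
  next
    case (Cons P L)
    then have P: "P \<in> set Ps" and L: "set L \<subseteq> set Ps" by auto
    obtain y' where y': "y' \<in> I" "\<one>\<^bsub>R\<^esub> = foldr (\<otimes>\<^bsub>R\<^esub>) (map pf L) \<one>\<^bsub>R\<^esub> \<oplus>\<^bsub>R\<^esub> y'"
      using Cons.IH[OF L] by blast
    let ?z = "foldr (\<otimes>\<^bsub>R\<^esub>) (map pf L) \<one>\<^bsub>R\<^esub>"
    have "set (map pf L) \<subseteq> carrier R"
    proof
      fix z assume "z \<in> set (map pf L)"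
      then obtain P' where P': "P' \<in> set L" "z = pf P'" by auto
      then have P'': "P' \<in> set Ps" using L by blast
      show "z \<in> carrier R" using gP(2)[OF P''] PR[OF P''] P'(2) by blast
    qed
    then have zc: "?z \<in> carrier R" by (rule lprod_closed')
    have pc: "pf P \<in> carrier R" using gP(2)[OF P] PR[OF P] by blast
    have yc: "yf P \<in> carrier R" using gP(1)[OF P] IR by blast
    have y'c: "y' \<in> carrier R" using y'(1) IR by blast
    have "pf P \<otimes>\<^bsub>R\<^esub> ?z \<oplus>\<^bsub>R\<^esub> (yf P \<otimes>\<^bsub>R\<^esub> ?z \<oplus>\<^bsub>R\<^esub> y') = (pf P \<oplus>\<^bsub>R\<^esub> yf P) \<otimes>\<^bsub>R\<^esub> ?z \<oplus>\<^bsub>R\<^esub> y'"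
      using pc yc zc y'c by (simp add: R.l_distr R.a_assoc)
    also have "pf P \<oplus>\<^bsub>R\<^esub> yf P = \<one>\<^bsub>R\<^esub>" using gP(3)[OF P] pc yc by (simp add: R.a_comm)
    finally have e: "pf P \<otimes>\<^bsub>R\<^esub> ?z \<oplus>\<^bsub>R\<^esub> (yf P \<otimes>\<^bsub>R\<^esub> ?z \<oplus>\<^bsub>R\<^esub> y') = \<one>\<^bsub>R\<^esub>"
      using zc y'(2) by simp
    have "yf P \<otimes>\<^bsub>R\<^esub> ?z \<oplus>\<^bsub>R\<^esub> y' \<in> I"
      using ideal.I_r_closed[OF I(1) gP(1)[OF P] zc] y'(1)
        additive_subgroup.a_closed[OF ideal.axioms(1)[OF I(1)]] by blast
    moreover have "foldr (\<otimes>\<^bsub>R\<^esub>) (map pf (P # L)) \<one>\<^bsub>R\<^esub> = pf P \<otimes>\<^bsub>R\<^esub> ?z" by simp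
    ultimately show ?case using e[symmetric] by metis
  qed
  obtain y where y: "y \<in> I" "\<one>\<^bsub>R\<^esub> = foldr (\<otimes>\<^bsub>R\<^esub>) (map pf Ps) \<one>\<^bsub>R\<^esub> \<oplus>\<^bsub>R\<^esub> y"
    using lst[of Ps] by blast
  have "list_all2 (\<lambda>x P. x \<in> P) (map pf Ps) Ps"
    using gP(2) by (simp add: list_all2_map1 list_all2_same)
  then have aA: "foldr (\<otimes>\<^bsub>R\<^esub>) (map pf Ps) \<one>\<^bsub>R\<^esub> \<in> A" using Ps(2) by blast
  have yc: "y \<in> carrier R" using y(1) IR by blast
  have Mcyc: "\<exists>c\<in>carrier R. x = c \<odot>\<^bsub>M\<^esub> m" if x: "x \<in> carrier M" for x
  proof -
    let ?a = "foldr (\<otimes>\<^bsub>R\<^esub>) (map pf Ps) \<one>\<^bsub>R\<^esub>"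
    have ac: "?a \<in> carrier R" using aA AR by blast
    have "x = (?a \<oplus>\<^bsub>R\<^esub> y) \<odot>\<^bsub>M\<^esub> x" using y(2)[symmetric] x by simp
    also have "\<dots> = ?a \<odot>\<^bsub>M\<^esub> x \<oplus>\<^bsub>M\<^esub> y \<odot>\<^bsub>M\<^esub> x" using ac yc x by (simp add: smult_l_distr)
    also have "?a \<odot>\<^bsub>M\<^esub> x = \<zero>\<^bsub>M\<^esub>" using aA x unfolding A_def by blast
    finally have "x = y \<odot>\<^bsub>M\<^esub> x" using yc x by simp
    moreover have "y \<odot>\<^bsub>M\<^esub> x \<in> cyc m" using I(2) itm_gen[OF y(1) x] by simp
    ultimately show ?thesis using cycE by metis
  qed
  have eqv: "c \<odot>\<^bsub>M\<^esub> m = c' \<odot>\<^bsub>M\<^esub> m \<longleftrightarrow> A +>\<^bsub>R\<^esub> c = A +>\<^bsub>R\<^esub> c'"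
    if c: "c \<in> carrier R" "c' \<in> carrier R" for c c'
  proof -
    have dif: "(c \<ominus>\<^bsub>R\<^esub> c') \<odot>\<^bsub>M\<^esub> m = c \<odot>\<^bsub>M\<^esub> m \<oplus>\<^bsub>M\<^esub> \<ominus>\<^bsub>M\<^esub> (c' \<odot>\<^bsub>M\<^esub> m)"
      using c m(1) by (simp add: R.minus_eq smult_l_distr smult_l_minus)
    have dc: "c \<ominus>\<^bsub>R\<^esub> c' \<in> carrier R" using c by simp
    have "c \<odot>\<^bsub>M\<^esub> m = c' \<odot>\<^bsub>M\<^esub> m \<longleftrightarrow> c \<ominus>\<^bsub>R\<^esub> c' \<in> A"
    proof
      assume e: "c \<odot>\<^bsub>M\<^esub> m = c' \<odot>\<^bsub>M\<^esub> m"
      have z: "(c \<ominus>\<^bsub>R\<^esub> c') \<odot>\<^bsub>M\<^esub> m = \<zero>\<^bsub>M\<^esub>" unfolding dif e using c m(1) by (simp add: M.r_neg)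
      have "\<forall>x\<in>carrier M. (c \<ominus>\<^bsub>R\<^esub> c') \<odot>\<^bsub>M\<^esub> x = \<zero>\<^bsub>M\<^esub>"
      proof
        fix x assume x: "x \<in> carrier M"
        obtain e where ec: "e \<in> carrier R" "x = e \<odot>\<^bsub>M\<^esub> m" using Mcyc[OF x] by blast
        have "(c \<ominus>\<^bsub>R\<^esub> c') \<odot>\<^bsub>M\<^esub> x = e \<odot>\<^bsub>M\<^esub> ((c \<ominus>\<^bsub>R\<^esub> c') \<odot>\<^bsub>M\<^esub> m)"
          using ec dc m(1) by (simp add: smult_assoc1[symmetric] R.m_comm)
        then show "(c \<ominus>\<^bsub>R\<^esub> c') \<odot>\<^bsub>M\<^esub> x = \<zero>\<^bsub>M\<^esub>" using z ec by simp
      qed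
      then show "c \<ominus>\<^bsub>R\<^esub> c' \<in> A" unfolding A_def using dc by blast
    next
      assume "c \<ominus>\<^bsub>R\<^esub> c' \<in> A"
      then have "(c \<ominus>\<^bsub>R\<^esub> c') \<odot>\<^bsub>M\<^esub> m = \<zero>\<^bsub>M\<^esub>" unfolding A_def using m(1) by blast
      then have "c \<odot>\<^bsub>M\<^esub> m \<oplus>\<^bsub>M\<^esub> \<ominus>\<^bsub>M\<^esub> (c' \<odot>\<^bsub>M\<^esub> m) = \<zero>\<^bsub>M\<^esub>" using dif by simp
      then have "\<ominus>\<^bsub>M\<^esub> (\<ominus>\<^bsub>M\<^esub> (c' \<odot>\<^bsub>M\<^esub> m)) = c \<odot>\<^bsub>M\<^esub> m"
        using c m(1) by (intro M.minus_equality) auto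
      then show "c \<odot>\<^bsub>M\<^esub> m = c' \<odot>\<^bsub>M\<^esub> m" using c m(1) by simp
    qed
    also have "\<dots> \<longleftrightarrow> A +>\<^bsub>R\<^esub> c = A +>\<^bsub>R\<^esub> c'" by (rule R.quotient_eq_iff_same_a_r_cos[OF Aideal c])
    finally show ?thesis .
  qed
  define f where "f x = A +>\<^bsub>R\<^esub> (SOME c. c \<in> carrier R \<and> x = c \<odot>\<^bsub>M\<^esub> m)" for x
  have fc: "f (c \<odot>\<^bsub>M\<^esub> m) = A +>\<^bsub>R\<^esub> c" if c: "c \<in> carrier R" for c
  proof -
    have "\<exists>c'. c' \<in> carrier R \<and> c \<odot>\<^bsub>M\<^esub> m = c' \<odot>\<^bsub>M\<^esub> m" using c by blast
    then have h: "(SOME c'. c' \<in> carrier R \<and> c \<odot>\<^bsub>M\<^esub> m = c' \<odot>\<^bsub>M\<^esub> m) \<in> carrier R \<and>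
       c \<odot>\<^bsub>M\<^esub> m = (SOME c'. c' \<in> carrier R \<and> c \<odot>\<^bsub>M\<^esub> m = c' \<odot>\<^bsub>M\<^esub> m) \<odot>\<^bsub>M\<^esub> m"
      by (rule someI_ex)
    then show ?thesis unfolding f_def using eqv c by metis
  qed
  have carQ: "carrier (quotient_module R A) = (\<Union>c\<in>carrier R. {A +>\<^bsub>R\<^esub> c})"
    unfolding quotient_module_def FactRing_def by (simp add: A_RCOSETS_def')
  have "module_iso R M (quotient_module R A) f"
    unfolding module_iso_def
  proof (intro conjI ballI)
    show "bij_betw f (carrier M) (carrier (quotient_module R A))"
      unfolding bij_betw_def carQ
    proof
      show "inj_on f (carrier M)"
      proof (rule inj_onI)
        fix x x' assume x: "x \<in> carrier M" and x': "x' \<in> carrier M" and e: "f x = f x'"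
        obtain c where c: "c \<in> carrier R" "x = c \<odot>\<^bsub>M\<^esub> m" using Mcyc[OF x] by blast
        obtain c' where c': "c' \<in> carrier R" "x' = c' \<odot>\<^bsub>M\<^esub> m" using Mcyc[OF x'] by blast
        have "A +>\<^bsub>R\<^esub> c = A +>\<^bsub>R\<^esub> c'" using e fc c c' by simp
        then show "x = x'" using eqv c c' by simp
      qed
      show "f ` carrier M = (\<Union>c\<in>carrier R. {A +>\<^bsub>R\<^esub> c})"
      proof
        show "f ` carrier M \<subseteq> (\<Union>c\<in>carrier R. {A +>\<^bsub>R\<^esub> c})"
        proof
          fix z assume "z \<in> f ` carrier M"
          then obtain x where x: "x \<in> carrier M" "z = f x" by blast
          obtain c where c: "c \<in> carrier R" "x = c \<odot>\<^bsub>M\<^esub> m" using Mcyc[OF x(1)] by blast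
          show "z \<in> (\<Union>c\<in>carrier R. {A +>\<^bsub>R\<^esub> c})" using x c fc by auto
        qed
        show "(\<Union>c\<in>carrier R. {A +>\<^bsub>R\<^esub> c}) \<subseteq> f ` carrier M"
        proof
          fix z assume "z \<in> (\<Union>c\<in>carrier R. {A +>\<^bsub>R\<^esub> c})"
          then obtain c where c: "c \<in> carrier R" "z = A +>\<^bsub>R\<^esub> c" by blast
          then have "z = f (c \<odot>\<^bsub>M\<^esub> m)" using fc by simp
          moreover have "c \<odot>\<^bsub>M\<^esub> m \<in> carrier M" using c m(1) by simp
          ultimately show "z \<in> f ` carrier M" by blast
        qed
      qed
    qed
    show "f (x \<oplus>\<^bsub>M\<^esub> x') = f x \<oplus>\<^bsub>quotient_module R A\<^esub> f x'" if x: "x \<in> carrier M" "x' \<in> carrier M" for x x'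
    proof -
      obtain c where c: "c \<in> carrier R" "x = c \<odot>\<^bsub>M\<^esub> m" using Mcyc[OF x(1)] by blast
      obtain c' where c': "c' \<in> carrier R" "x' = c' \<odot>\<^bsub>M\<^esub> m" using Mcyc[OF x(2)] by blast
      have "x \<oplus>\<^bsub>M\<^esub> x' = (c \<oplus>\<^bsub>R\<^esub> c') \<odot>\<^bsub>M\<^esub> m" using c c' m(1) by (simp add: smult_l_distr)
      then have "f (x \<oplus>\<^bsub>M\<^esub> x') = A +>\<^bsub>R\<^esub> (c \<oplus>\<^bsub>R\<^esub> c')" using fc c c' by simp
      also have "\<dots> = (A +>\<^bsub>R\<^esub> c) <+>\<^bsub>R\<^esub> (A +>\<^bsub>R\<^esub> c')" using ideal.a_rcos_sum[OF Aideal c(1) c'(1)] by simp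
      also have "\<dots> = f x \<oplus>\<^bsub>quotient_module R A\<^esub> f x'"
        using fc c c' unfolding quotient_module_def FactRing_def by simp
      finally show ?thesis .
    qed
    show "f (a \<odot>\<^bsub>M\<^esub> x) = a \<odot>\<^bsub>quotient_module R A\<^esub> f x" if h: "a \<in> carrier R" "x \<in> carrier M" for a x
    proof -
      obtain c where c: "c \<in> carrier R" "x = c \<odot>\<^bsub>M\<^esub> m" using Mcyc[OF h(2)] by blast
      have "a \<odot>\<^bsub>M\<^esub> x = (a \<otimes>\<^bsub>R\<^esub> c) \<odot>\<^bsub>M\<^esub> m" using c h(1) m(1) by (simp add: smult_assoc1)
      then have "f (a \<odot>\<^bsub>M\<^esub> x) = A +>\<^bsub>R\<^esub> (a \<otimes>\<^bsub>R\<^esub> c)" using fc c h(1) by simp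
      also have "\<dots> = rcoset_mult R A (A +>\<^bsub>R\<^esub> a) (A +>\<^bsub>R\<^esub> c)"
        using ideal.rcoset_mult_add[OF Aideal h(1) c(1)] by simp
      also have "\<dots> = a \<odot>\<^bsub>quotient_module R A\<^esub> f x"
        using fc c unfolding quotient_module_def quot_smult_def FactRing_def by simp
      finally show ?thesis .
    qed
  qed
  then show ?thesis using Aideal Anz unfolding module_isomorphic_def by blast
qed

end

theorem mainTheorem9:
  fixes D :: "('a, 'c) ring_scheme" and M :: "('a, 'b, 'd) module_scheme"
  assumes "dedekind_domain D"
    and "module D M"
    and "carrier M \<noteq> {\<zero>\<^bsub>M\<^esub>}"
    and "finitely_generated_module D M"
    and "multiplication_module D M"
  shows "(\<exists>J. ideal J D \<and> J \<noteq> {\<zero>\<^bsub>D\<^esub>} \<and> module_isomorphic D M (ideal_module D J)) \<or>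
         (\<exists>I. ideal I D \<and> I \<noteq> {\<zero>\<^bsub>D\<^esub>} \<and> module_isomorphic D M (quotient_module D I))"
proof -
  have noeth: "noetherian_domain D" using assms(1) unfolding dedekind_domain_def by blast
  have dim1: "\<forall>P. primeideal P D \<and> P \<noteq> {\<zero>\<^bsub>D\<^esub>} \<longrightarrow> maximalideal P D"
    using assms(1) unfolding dedekind_domain_def by blast
  have dom: "domain D" using noeth noetherian_domain.axioms(2) by blast
  have dd: "ddmod D M" unfolding ddmod_def dmod_def using assms(2) dom by blast
  show ?thesis
  proof (cases "\<forall>r\<in>carrier D. r \<noteq> \<zero>\<^bsub>D\<^esub> \<longrightarrow> (\<exists>x\<in>carrier M. r \<odot>\<^bsub>M\<^esub> x \<noteq> \<zero>\<^bsub>M\<^esub>)")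
    case True
    then show ?thesis using ddmod.faithful_case[OF dd assms(5) assms(4) assms(3)] by blast
  next
    case False
    then have "\<exists>r\<in>carrier D. r \<noteq> \<zero>\<^bsub>D\<^esub> \<and> (\<forall>x\<in>carrier M. r \<odot>\<^bsub>M\<^esub> x = \<zero>\<^bsub>M\<^esub>)" by blast
    then show ?thesis
      using ddmod.torsion_case[OF dd assms(5) assms(4) assms(3) noeth dim1] by blast
  qed
qed

end
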